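(* Let $T_2=\frac12\log\big(\det(W_\gamma)/\det(W_{\gamma^0})\big)$ and let $0<\underline\phi_n\le\bar\phi_n$. (a) Suppose that, for some $C_3>0$ and $\delta\ge0$, $\inf_{\gamma\in S_1}\lambda_-\big(\frac1nX_{\gamma\setminus\gamma^0}^T(I_n-P_{\gamma^0})X_{\gamma\setminus\gamma^0}\big)\ge C_3n^{-\delta}$. Then for every $\gamma\in S_1$ and all $c_1,\dots,c_p\in[\underline\phi_n,\bar\phi_n]$, $T_2\ge\frac12(|\gamma|-s_n)\log(1+C_3n^{1-\delta}\underline\phi_n)$. (b) Suppose $\gamma^0\ne\emptyset$ and $\varphi_{\max}(n)\le C_2$ for a constant $C_2>0$. Then for every $\gamma\in S_2$ and all $c_1,\dots,c_p\in[\underline\phi_n,\bar\phi_n]$, $T_2\ge-\frac12s_n\log(1+C_2n\bar\phi_n)$.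
   Context: $X$ is an $n\times p$ matrix with $X_\gamma^TX_\gamma$ invertible for every state vector $\gamma$; $\beta^0\in\mathbb R^p$. A state vector is $\gamma\in\{0,1\}^p$; $|\gamma|$ its number of ones; $X_\gamma$ the columns of $X$ indexed by $\{j:\gamma_j=1\}$. $\gamma^0_j=I(\beta^0_j\ne0)$, $s_n=|\gamma^0|$, $\emptyset$ the zero vector. $\gamma\setminus\gamma'$ has $j$-th entry $I(\gamma_j=1,\gamma'_j=0)$; $\gamma\subset\gamma'$ means $\gamma\setminus\gamma'=0$. $P_\gamma=X_\gamma(X_\gamma^TX_\gamma)^{-1}X_\gamma^T$, $P_\emptyset=0$. $S_1=\{\gamma:\gamma^0\subset\gamma,\gamma\neq\gamma^0\}$, $S_2=\{\gamma:\gamma^0\not\subset\gamma\}$. $\lambda_\pm$ are largest/smallest eigenvalues; $\varphi_{\max}(n)=\max_{\gamma\in S_2}\lambda_+\big(\frac1nX_{\gamma^0\setminus\gamma}^TX_{\gamma^0\setminus\gamma}\big)$. With hyperparameters $c_j>0$, $\Sigma=\mathrm{diag}(c_1,\dots,c_p)$, $\Sigma_\gamma$ its diagonal submatrix indexed by $\gamma$, $U_\gamma=\Sigma_\gamma^{-1}+X_\gamma^TX_\gamma$, $W_\gamma=\Sigma_\gamma^{1/2}U_\gamma\Sigma_\gamma^{1/2}$, with conventions $X_\emptyset=0$, $\Sigma_\emptyset=U_\emptyset=W_\emptyset=1$. *)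

theory Defs
  imports "Jordan_Normal_Form.DL_Submatrix" "Jordan_Normal_Form.Char_Poly"
begin

(* State vectors gamma in {0,1}^p are represented by their support sets
   gamma \<subseteq> {..<p}; |gamma| = card gamma. *)

definition state_vectors :: "nat \<Rightarrow> nat set set" where
  "state_vectors p = Pow {..<p}"

definition gamma0 :: "real vec \<Rightarrow> nat set" where
  "gamma0 \<beta>0 = {j. j < dim_vec \<beta>0 \<and> \<beta>0 $ j \<noteq> 0}"

definition Xsub :: "real mat \<Rightarrow> nat set \<Rightarrow> real mat" where
  "Xsub X \<gamma> = submatrix X UNIV \<gamma>"

definition minv :: "real mat \<Rightarrow> real mat" where
  "minv A = (SOME B. B \<in> carrier_mat (dim_row A) (dim_row A) \<and>
               A * B = 1\<^sub>m (dim_row A) \<and> B * A = 1\<^sub>m (dim_row A))"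

definition Proj :: "real mat \<Rightarrow> nat set \<Rightarrow> real mat" where
  "Proj X \<gamma> = (if \<gamma> = {} then 0\<^sub>m (dim_row X) (dim_row X)
     else Xsub X \<gamma> * minv (transpose_mat (Xsub X \<gamma>) * Xsub X \<gamma>) * transpose_mat (Xsub X \<gamma>))"

definition S1 :: "nat \<Rightarrow> nat set \<Rightarrow> nat set set" where
  "S1 p g0 = {\<gamma> \<in> state_vectors p. g0 \<subseteq> \<gamma> \<and> \<gamma> \<noteq> g0}"

definition S2 :: "nat \<Rightarrow> nat set \<Rightarrow> nat set set" where
  "S2 p g0 = {\<gamma> \<in> state_vectors p. \<not> g0 \<subseteq> \<gamma>}"

definition lambda_max :: "real mat \<Rightarrow> real" where
  "lambda_max A = Max {k. eigenvalue A k}"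

definition lambda_min :: "real mat \<Rightarrow> real" where
  "lambda_min A = Min {k. eigenvalue A k}"

definition phi_max :: "real mat \<Rightarrow> real vec \<Rightarrow> real" where
  "phi_max X \<beta>0 = Max ((\<lambda>\<gamma>. lambda_max ((1 / real (dim_row X)) \<cdot>\<^sub>m
       (transpose_mat (Xsub X (gamma0 \<beta>0 - \<gamma>)) * Xsub X (gamma0 \<beta>0 - \<gamma>))))
       ` S2 (dim_col X) (gamma0 \<beta>0))"

definition Sigma_pow :: "(nat \<Rightarrow> real) \<Rightarrow> real \<Rightarrow> nat set \<Rightarrow> real mat" where
  "Sigma_pow c a \<gamma> = mat_diag (card \<gamma>) (\<lambda>i. c (pick \<gamma> i) powr a)"

definition Sigma :: "(nat \<Rightarrow> real) \<Rightarrow> nat set \<Rightarrow> real mat" where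
  "Sigma c \<gamma> = mat_diag (card \<gamma>) (\<lambda>i. c (pick \<gamma> i))"

definition Umat :: "real mat \<Rightarrow> (nat \<Rightarrow> real) \<Rightarrow> nat set \<Rightarrow> real mat" where
  "Umat X c \<gamma> = minv (Sigma c \<gamma>) + transpose_mat (Xsub X \<gamma>) * Xsub X \<gamma>"

(* W_gamma = Sigma^{1/2} U Sigma^{1/2}; for gamma = {} this is the 0x0 matrix, det = 1 *)
definition Wmat :: "real mat \<Rightarrow> (nat \<Rightarrow> real) \<Rightarrow> nat set \<Rightarrow> real mat" where
  "Wmat X c \<gamma> = Sigma_pow c (1/2) \<gamma> * Umat X c \<gamma> * Sigma_pow c (1/2) \<gamma>"

definition T2 :: "real mat \<Rightarrow> real vec \<Rightarrow> (nat \<Rightarrow> real) \<Rightarrow> nat set \<Rightarrow> real" where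
  "T2 X \<beta>0 c \<gamma> = 1/2 * ln (det (Wmat X c \<gamma>) / det (Wmat X c (gamma0 \<beta>0)))"

end

theory Submission imports Defs "Jordan_Normal_Form.Schur_Decomposition" "HOL-Computational_Algebra.Fundamental_Theorem_Algebra" begin

lemma sym_real_eigen:
  fixes M :: "real mat"
  assumes M: "M \<in> carrier_mat n n" and sym: "transpose_mat M = M" and n: "n > 0"
  shows "\<exists>e v. v \<in> carrier_vec n \<and> v \<noteq> 0\<^sub>v n \<and> M *\<^sub>v v = e \<cdot>\<^sub>v v"
proof -
  let ?C = "map_mat complex_of_real M"
  have C: "?C \<in> carrier_mat n n" using M by auto
  have cp: "char_poly ?C = map_poly of_real (char_poly M)"
    by (rule of_real_hom.char_poly_hom[OF M])
  have "degree (char_poly ?C) = n" using degree_monic_char_poly[OF C] by auto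
  hence "\<not> constant (poly (char_poly ?C))" using n constant_degree[of "char_poly ?C"] by simp
  then obtain a where a: "poly (char_poly ?C) a = 0" using fundamental_theorem_of_algebra by blast
  hence "eigenvalue ?C a" using eigenvalue_root_char_poly[OF C] by auto
  then obtain v where ev: "eigenvector ?C v a" unfolding eigenvalue_def by auto
  hence v: "v \<in> carrier_vec n" and v0: "v \<noteq> 0\<^sub>v n" and Cv: "?C *\<^sub>v v = a \<cdot>\<^sub>v v"
    unfolding eigenvector_def using M by auto
  have row: "(\<Sum>j<n. of_real (M $$ (i,j)) * v $ j) = a * v $ i" if i: "i < n" for i
  proof -
    have "(?C *\<^sub>v v) $ i = (a \<cdot>\<^sub>v v) $ i" using Cv by simp
    thus ?thesis using i M v by (simp add: scalar_prod_def lessThan_atLeast0)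
  qed
  define N where "N = (\<Sum>i<n. cnj (v $ i) * v $ i)"
  define s where "s = (\<Sum>i<n. \<Sum>j<n. cnj (v $ i) * of_real (M $$ (i,j)) * v $ j)"
  have s1: "s = a * N"
  proof -
    have "s = (\<Sum>i<n. cnj (v $ i) * (\<Sum>j<n. of_real (M $$ (i,j)) * v $ j))"
      unfolding s_def by (simp add: sum_distrib_left mult.assoc)
    also have "\<dots> = (\<Sum>i<n. cnj (v $ i) * (a * v $ i))" using row by simp
    finally show ?thesis unfolding N_def by (simp add: sum_distrib_left algebra_simps)
  qed
  have Mij: "M $$ (i,j) = M $$ (j,i)" if "i < n" "j < n" for i j
    using arg_cong[OF sym, of "\<lambda>A. A $$ (j,i)"] M that by auto
  have s2: "cnj s = s"
  proof -
    have "cnj s = (\<Sum>i<n. \<Sum>j<n. v $ i * of_real (M $$ (i,j)) * cnj (v $ j))"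
      unfolding s_def by simp
    also have "\<dots> = (\<Sum>j<n. \<Sum>i<n. v $ i * of_real (M $$ (i,j)) * cnj (v $ j))"
      by (rule sum.swap)
    also have "\<dots> = s" unfolding s_def
      by (intro sum.cong refl, simp add: Mij mult.commute mult.left_commute)
    finally show ?thesis .
  qed
  have N: "cnj N = N" unfolding N_def by (simp add: mult.commute)
  have N0: "N \<noteq> 0"
  proof
    assume "N = 0"
    have "N = of_real (\<Sum>i<n. (cmod (v $ i))^2)" unfolding N_def
      by (simp add: complex_norm_square mult.commute del: of_real_power)
    hence "(\<Sum>i<n. (cmod (v $ i))^2) = 0" using \<open>N = 0\<close> by (metis of_real_eq_0_iff)
    hence "\<forall>i\<in>{..<n}. (cmod (v $ i))^2 = 0" by (subst (asm) sum_nonneg_eq_0_iff) auto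
    hence "v = 0\<^sub>v n" using v by (intro eq_vecI) auto
    thus False using v0 by simp
  qed
  have "cnj a * N = a * N" using s1 s2 N by (metis complex_cnj_mult)
  hence ca: "cnj a = a" using N0 by simp
  hence aR: "a = of_real (Re a)" by (metis complex_is_Real_iff Reals_cnj_iff of_real_Re)
  have "of_real (poly (char_poly M) (Re a)) = poly (char_poly ?C) a"
    unfolding cp by (subst aR, simp add: of_real_hom.poly_map_poly)
  hence "poly (char_poly M) (Re a) = 0" using a by simp
  hence "eigenvalue M (Re a)" using eigenvalue_root_char_poly[OF M] by auto
  then obtain w where "eigenvector M w (Re a)" unfolding eigenvalue_def by auto
  thus ?thesis unfolding eigenvector_def using M by auto
qed


lemma conj_real_vec[simp]: "conjugate (v :: real vec) = v"
  by (rule eq_vecI, auto simp: conjugate_vec_def)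

lemma orthonormal_completion:
  fixes u :: "real vec"
  assumes u: "u \<in> carrier_vec m" and u1: "u \<bullet> u = 1"
  shows "\<exists>W. W \<in> carrier_mat m m \<and> transpose_mat W * W = 1\<^sub>m m \<and> col W 0 = u"
proof -
  interpret cof_vec_space m "TYPE(real)" .
  have u0: "u \<noteq> 0\<^sub>v m" using u1 u by auto
  define b where "b = basis_completion u"
  from basis_completion[OF u u0, folded b_def]
  have b: "set b \<subseteq> carrier_vec m" and dist_b: "distinct b"
    and indep: "\<not> lin_dep (set b)" and len_b: "length b = m" and hdb: "hd b = u" by auto
  have m0: "m > 0" using u0 u by (cases m, auto)
  from hdb len_b m0 obtain vs where bv: "b = u # vs" by (cases b, auto)
  define ws where "ws = gram_schmidt m b"
  from gram_schmidt_result[OF b dist_b indep ws_def]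
  have ws: "set ws \<subseteq> carrier_vec m" "corthogonal ws" "length ws = m" by (auto simp: len_b)
  have hdws: "hd ws = u" unfolding ws_def bv using u by simp
  have orth: "ws ! i \<bullet> ws ! j = 0 \<longleftrightarrow> i \<noteq> j" if "i < m" "j < m" for i j
    using corthogonalD[OF ws(2), of i j] that ws(3) by simp
  define nw where "nw = (\<lambda>w::real vec. (1 / sqrt (w \<bullet> w)) \<cdot>\<^sub>v w)"
  define ws' where "ws' = map nw ws"
  have ws'_car: "ws' ! i \<in> carrier_vec m" if "i < m" for i
    using ws that unfolding ws'_def nw_def by auto
  have sq_pos: "ws ! i \<bullet> ws ! i > 0" if "i < m" for i
  proof -
    have "ws ! i \<in> carrier_vec m" using ws that by auto
    moreover have "ws ! i \<bullet> ws ! i \<noteq> 0" using orth[OF that that] by simp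
    ultimately show ?thesis using conjugate_square_greater_0_vec[of "ws ! i" m] by (metis conj_real_vec scalar_prod_left_zero zero_carrier_vec)
  qed
  have ip: "ws' ! i \<bullet> ws' ! j = (if i = j then 1 else 0)" if ij: "i < m" "j < m" for i j
  proof -
    have ci: "ws ! i \<in> carrier_vec m" and cj: "ws ! j \<in> carrier_vec m" using ws ij by auto
    have "ws' ! i \<bullet> ws' ! j = (1 / sqrt (ws!i \<bullet> ws!i)) * (1 / sqrt (ws!j \<bullet> ws!j)) * (ws ! i \<bullet> ws ! j)"
      unfolding ws'_def nw_def using ij ws ci cj by simp
    thus ?thesis using orth[OF ij] sq_pos[OF ij(1)]
      by (cases "i = j", auto simp: real_sqrt_mult[symmetric])
  qed
  define W where "W = mat_of_cols m ws'"
  have W: "W \<in> carrier_mat m m" unfolding W_def using ws mat_of_cols_carrier(1)[of m ws'] by (simp add: ws'_def)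
  have colW: "col W i = ws' ! i" if "i < m" for i
    unfolding W_def using ws'_car[OF that] that ws by (simp add: ws'_def)
  have "transpose_mat W * W = 1\<^sub>m m"
    by (rule eq_matI, insert W, auto simp: colW ip)
  moreover have "col W 0 = u"
  proof -
    have "ws ! 0 = u" using hdws ws(3) m0 by (cases ws, auto)
    hence "ws' ! 0 = u" unfolding ws'_def nw_def using ws(3) m0 u1 by simp
    thus ?thesis using colW m0 by simp
  qed
  ultimately show ?thesis using W by blast
qed

lemma spectral:
  fixes M :: "real mat"
  assumes "M \<in> carrier_mat n n" "transpose_mat M = M"
  shows "\<exists>P d. P \<in> carrier_mat n n \<and> transpose_mat P * P = 1\<^sub>m n \<and>
           transpose_mat P * M * P = mat_diag n d"
  using assms
proof (induction n arbitrary: M)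
  case 0
  show ?case
    by (rule exI[of _ "1\<^sub>m 0"], rule exI[of _ "\<lambda>_. 0"], insert 0, auto intro!: eq_matI simp: mat_diag_def)
next
  case (Suc n M)
  have M: "M \<in> carrier_mat (Suc n) (Suc n)" and sym: "transpose_mat M = M" using Suc by auto
  obtain e v where v: "v \<in> carrier_vec (Suc n)" and v0: "v \<noteq> 0\<^sub>v (Suc n)"
    and Mv: "M *\<^sub>v v = e \<cdot>\<^sub>v v" using sym_real_eigen[OF M sym] by auto
  have vv: "v \<bullet> v > 0" using conjugate_square_greater_0_vec[OF v] v0 by simp
  define u where "u = (1 / sqrt (v \<bullet> v)) \<cdot>\<^sub>v v"
  have u: "u \<in> carrier_vec (Suc n)" using v unfolding u_def by auto
  have u1: "u \<bullet> u = 1" unfolding u_def using v vv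
    by (simp add: real_sqrt_mult[symmetric])
  have Mu: "M *\<^sub>v u = e \<cdot>\<^sub>v u" unfolding u_def
    using mult_mat_vec[OF M v] Mv v by (auto simp: smult_smult_assoc mult.commute)
  obtain W where W: "W \<in> carrier_mat (Suc n) (Suc n)" and WtW: "transpose_mat W * W = 1\<^sub>m (Suc n)"
    and W0: "col W 0 = u" using orthonormal_completion[OF u u1] by auto
  define B where "B = transpose_mat W * M * W"
  have B: "B \<in> carrier_mat (Suc n) (Suc n)" unfolding B_def using W M by auto
  have B0: "B $$ (i,0) = (if i = 0 then e else 0)" if i: "i < Suc n" for i
  proof -
    have "B = transpose_mat W * (M * W)" unfolding B_def using W M by simp
    hence "B $$ (i,0) = col W i \<bullet> (M *\<^sub>v col W 0)" using i W M by (simp add: mult_mat_vec_def)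
    also have "\<dots> = e * (col W i \<bullet> col W 0)" unfolding W0 Mu using u W i by simp
    also have "col W i \<bullet> col W 0 = (transpose_mat W * W) $$ (i,0)" using i W by simp
    also have "\<dots> = (if i = 0 then 1 else 0)" unfolding WtW using i by simp
    finally show ?thesis by simp
  qed
  have Bsym: "transpose_mat B = B"
  proof -
    have "transpose_mat B = transpose_mat (transpose_mat W * M * W)" unfolding B_def ..
    also have "\<dots> = transpose_mat W * transpose_mat (transpose_mat W * M)"
      by (rule transpose_mult[of _ "Suc n" "Suc n"], insert W M, auto)
    also have "transpose_mat (transpose_mat W * M) = transpose_mat M * W"
      by (subst transpose_mult[of _ "Suc n" "Suc n"], insert W M, auto)
    finally show ?thesis unfolding B_def sym using W M by simp
  qed
  have Bs: "B $$ (i,j) = B $$ (j,i)" if "i < Suc n" "j < Suc n" for i j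
    using arg_cong[OF Bsym, of "\<lambda>A. A $$ (j,i)"] B that by auto
  define M' where "M' = mat n n (\<lambda>(i,j). B $$ (Suc i, Suc j))"
  have M': "M' \<in> carrier_mat n n" unfolding M'_def by auto
  have M'sym: "transpose_mat M' = M'" unfolding M'_def
    by (rule eq_matI, auto simp: Bs)
  obtain P' d' where P': "P' \<in> carrier_mat n n" and P'P: "transpose_mat P' * P' = 1\<^sub>m n"
    and P'M: "transpose_mat P' * M' * P' = mat_diag n d'" using Suc.IH[OF M' M'sym] by auto
  have Bblock: "B = four_block_mat (mat 1 1 (\<lambda>_. e)) (0\<^sub>m 1 n) (0\<^sub>m n 1) M'"
  proof (rule eq_matI)
    fix i j assume ij: "i < dim_row (four_block_mat (mat 1 1 (\<lambda>_. e)) (0\<^sub>m 1 n) (0\<^sub>m n 1) M')"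
       "j < dim_col (four_block_mat (mat 1 1 (\<lambda>_. e)) (0\<^sub>m 1 n) (0\<^sub>m n 1) M')"
    hence i: "i < Suc n" and j: "j < Suc n" using M' by auto
    show "B $$ (i,j) = four_block_mat (mat 1 1 (\<lambda>_. e)) (0\<^sub>m 1 n) (0\<^sub>m n 1) M' $$ (i,j)"
    proof (cases "j = 0")
      case True thus ?thesis using B0[OF i] i M' by auto
    next
      case False
      show ?thesis
      proof (cases "i = 0")
        case True thus ?thesis using B0[OF j] Bs[OF i j] False j M' by auto
      next
        case i0: False
        thus ?thesis using False i j M' unfolding M'_def by auto
      qed
    qed
  qed (insert B M', auto)
  define D where "D = four_block_mat (1\<^sub>m 1) (0\<^sub>m 1 n) (0\<^sub>m n 1) P'"
  have D: "D \<in> carrier_mat (Suc n) (Suc n)" unfolding D_def using P' by auto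
  have Dt: "transpose_mat D = four_block_mat (1\<^sub>m 1) (0\<^sub>m 1 n) (0\<^sub>m n 1) (transpose_mat P')"
    unfolding D_def by (subst transpose_four_block_mat, insert P', auto)
  define P where "P = W * D"
  have P: "P \<in> carrier_mat (Suc n) (Suc n)" unfolding P_def using W D by auto
  have tP: "transpose_mat P = transpose_mat D * transpose_mat W"
    unfolding P_def by (rule transpose_mult[OF W D])
  have Wt: "transpose_mat W \<in> carrier_mat (Suc n) (Suc n)" and Dt': "transpose_mat D \<in> carrier_mat (Suc n) (Suc n)"
    using W D by auto
  have "transpose_mat P * P = transpose_mat D * (transpose_mat W * W) * D"
    unfolding tP unfolding P_def using W D Wt Dt' by (simp add: assoc_mult_mat[of _ "Suc n" "Suc n" _ "Suc n" _ "Suc n"])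
  also have "\<dots> = transpose_mat D * D" unfolding WtW using D by simp
  also have "\<dots> = four_block_mat (1\<^sub>m 1) (0\<^sub>m 1 n) (0\<^sub>m n 1) (1\<^sub>m n)"
    unfolding Dt unfolding D_def by (subst mult_four_block_mat, insert P' P'P, auto)
  also have "\<dots> = 1\<^sub>m (Suc n)" by (rule eq_matI, auto)
  finally have PP: "transpose_mat P * P = 1\<^sub>m (Suc n)" .
  define d where "d = (\<lambda>i. if i = 0 then e else d' (i - 1))"
  have "transpose_mat P * M * P = transpose_mat D * B * D"
    unfolding tP unfolding P_def B_def using W D M Wt Dt' by (simp add: assoc_mult_mat[of _ "Suc n" "Suc n" _ "Suc n" _ "Suc n"])
  also have "\<dots> = four_block_mat (mat 1 1 (\<lambda>_. e)) (0\<^sub>m 1 n) (0\<^sub>m n 1) (transpose_mat P' * M' * P')"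
    unfolding Dt Bblock unfolding D_def
    by (subst mult_four_block_mat, insert P' M', auto, subst mult_four_block_mat, insert P' M', auto)
  also have "\<dots> = mat_diag (Suc n) d" unfolding P'M d_def
    by (rule eq_matI, auto simp: mat_diag_def)
  finally show ?case using P PP by blast
qed


lemma mat_diag_mult_vec:
  assumes y: "y \<in> carrier_vec k"
  shows "mat_diag k d *\<^sub>v y = vec k (\<lambda>i. d i * y $ i)"
proof (rule eq_vecI)
  fix i assume "i < dim_vec (vec k (\<lambda>i. d i * y $ i))"
  hence i: "i < k" by simp
  have "(mat_diag k d *\<^sub>v y) $ i = (\<Sum>j\<in>{0..<k}. (if i = j then d j else 0) * y $ j)"
    using i y by (simp add: mat_diag_def scalar_prod_def)
  also have "\<dots> = d i * y $ i" using i by (subst sum.remove[of _ i], auto)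
  finally show "(mat_diag k d *\<^sub>v y) $ i = vec k (\<lambda>i. d i * y $ i) $ i" using i by simp
qed (insert y, auto simp: mat_diag_def)

lemma mult3_vec:
  assumes "A \<in> carrier_mat k k" "B \<in> carrier_mat k k" "C \<in> carrier_mat k k" "y \<in> carrier_vec k"
  shows "(A * B * C) *\<^sub>v y = A *\<^sub>v (B *\<^sub>v (C *\<^sub>v y))"
proof -
  have "(A * B * C) *\<^sub>v y = (A * B) *\<^sub>v (C *\<^sub>v y)" by (rule assoc_mult_mat_vec, insert assms, auto)
  also have "\<dots> = A *\<^sub>v (B *\<^sub>v (C *\<^sub>v y))" by (rule assoc_mult_mat_vec, insert assms, auto)
  finally show ?thesis .
qed

lemma spec_PPt:
  fixes P :: "real mat"
  assumes P: "P \<in> carrier_mat k k" and PP: "transpose_mat P * P = 1\<^sub>m k"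
  shows "P * transpose_mat P = 1\<^sub>m k"
  using mat_mult_left_right_inverse[of "transpose_mat P" k P] P PP by auto

lemma spec_quad:
  fixes M P :: "real mat"
  assumes M: "M \<in> carrier_mat k k" and P: "P \<in> carrier_mat k k"
    and PP: "transpose_mat P * P = 1\<^sub>m k" and PM: "transpose_mat P * M * P = mat_diag k d"
    and x: "x \<in> carrier_vec k"
  shows "x \<bullet> (M *\<^sub>v x) = (\<Sum>i<k. d i * ((transpose_mat P *\<^sub>v x) $ i)^2)"
proof -
  define y where "y = transpose_mat P *\<^sub>v x"
  have y: "y \<in> carrier_vec k" unfolding y_def using P x by auto
  have Pt: "transpose_mat P \<in> carrier_mat k k" using P by auto
  have xy: "x = P *\<^sub>v y" unfolding y_def
    using spec_PPt[OF P PP] P x Pt by (simp add: assoc_mult_mat_vec[symmetric, of _ k k _ k])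
  have My: "M *\<^sub>v (P *\<^sub>v y) \<in> carrier_vec k" using M P y by auto
  have "x \<bullet> (M *\<^sub>v x) = (M *\<^sub>v (P *\<^sub>v y)) \<bullet> (P *\<^sub>v y)"
    unfolding xy by (rule comm_scalar_prod[of _ k], insert P y M, auto)
  also have "\<dots> = (transpose_mat P *\<^sub>v (M *\<^sub>v (P *\<^sub>v y))) \<bullet> y"
    by (rule transpose_vec_mult_scalar[symmetric, OF P y My])
  also have "transpose_mat P *\<^sub>v (M *\<^sub>v (P *\<^sub>v y)) = (transpose_mat P * M * P) *\<^sub>v y"
    using mult3_vec[OF Pt M P y] by simp
  also have "\<dots> = vec k (\<lambda>i. d i * y $ i)" unfolding PM by (rule mat_diag_mult_vec[OF y])
  also have "vec k (\<lambda>i. d i * y $ i) \<bullet> y = (\<Sum>i<k. d i * (y $ i)^2)"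
    using y by (simp add: scalar_prod_def lessThan_atLeast0 power2_eq_square mult.assoc)
  finally show ?thesis unfolding y_def .
qed

lemma spec_norm:
  fixes P :: "real mat"
  assumes P: "P \<in> carrier_mat k k"
    and PP: "transpose_mat P * P = 1\<^sub>m k" and x: "x \<in> carrier_vec k"
  shows "x \<bullet> x = (\<Sum>i<k. ((transpose_mat P *\<^sub>v x) $ i)^2)"
proof -
  have "transpose_mat P * 1\<^sub>m k * P = mat_diag k (\<lambda>_. 1)" using P PP by simp
  from spec_quad[OF one_carrier_mat P PP this x] x show ?thesis by simp
qed

lemma spec_eig_in:
  fixes M P :: "real mat"
  assumes M: "M \<in> carrier_mat k k" and P: "P \<in> carrier_mat k k"
    and PP: "transpose_mat P * P = 1\<^sub>m k" and PM: "transpose_mat P * M * P = mat_diag k d"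
    and e: "eigenvalue M e"
  shows "\<exists>i<k. d i = e"
proof -
  obtain v where v: "v \<in> carrier_vec k" and v0: "v \<noteq> 0\<^sub>v k" and Mv: "M *\<^sub>v v = e \<cdot>\<^sub>v v"
    using e M unfolding eigenvalue_def eigenvector_def by auto
  have Pt: "transpose_mat P \<in> carrier_mat k k" using P by auto
  define y where "y = transpose_mat P *\<^sub>v v"
  have y: "y \<in> carrier_vec k" unfolding y_def using P v by auto
  have vy: "v = P *\<^sub>v y" unfolding y_def
    using spec_PPt[OF P PP] P v Pt by (simp add: assoc_mult_mat_vec[symmetric, of _ k k _ k])
  have "y \<noteq> 0\<^sub>v k" using vy v0 P by auto
  then obtain i where i: "i < k" and yi: "y $ i \<noteq> 0" using y by (metis eq_vecI carrier_vecD index_zero_vec)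
  have "mat_diag k d *\<^sub>v y = (transpose_mat P * M * P) *\<^sub>v y" unfolding PM ..
  also have "\<dots> = transpose_mat P *\<^sub>v (M *\<^sub>v v)" unfolding vy using mult3_vec[OF Pt M P y] by simp
  also have "\<dots> = e \<cdot>\<^sub>v y" unfolding Mv y_def using Pt v by (simp add: mult_mat_vec)
  finally have "(mat_diag k d *\<^sub>v y) $ i = (e \<cdot>\<^sub>v y) $ i" by simp
  hence "d i * y $ i = e * y $ i" using i y by (simp add: mat_diag_mult_vec[OF y])
  thus ?thesis using yi i by auto
qed

lemma spec_eig_is:
  fixes M P :: "real mat"
  assumes M: "M \<in> carrier_mat k k" and P: "P \<in> carrier_mat k k"
    and PP: "transpose_mat P * P = 1\<^sub>m k" and PM: "transpose_mat P * M * P = mat_diag k d"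
    and i: "i < k"
  shows "eigenvalue M (d i)"
proof -
  have Pt: "transpose_mat P \<in> carrier_mat k k" using P by auto
  define w where "w = P *\<^sub>v unit_vec k i"
  have w: "w \<in> carrier_vec k" unfolding w_def using P by auto
  have Ptw: "transpose_mat P *\<^sub>v w = unit_vec k i" unfolding w_def
    using PP P Pt by (simp add: assoc_mult_mat_vec[symmetric, of _ k k _ k])
  have "w \<noteq> 0\<^sub>v k"
  proof
    assume "w = 0\<^sub>v k"
    moreover have "transpose_mat P *\<^sub>v 0\<^sub>v k = 0\<^sub>v k" using Pt by (intro eq_vecI, auto)
    ultimately have "(unit_vec k i :: real vec) = 0\<^sub>v k" using Ptw by simp
    thus False using i by (metis index_unit_vec(1) index_zero_vec(1) zero_neq_one)
  qed
  moreover have "M *\<^sub>v w = d i \<cdot>\<^sub>v w"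
  proof -
    have MP: "M = P * mat_diag k d * transpose_mat P"
    proof -
      have "P * (transpose_mat P * M * P) * transpose_mat P = (P * transpose_mat P) * M * (P * transpose_mat P)"
        using P Pt M by (simp add: assoc_mult_mat[of _ k k _ k _ k])
      thus ?thesis unfolding PM spec_PPt[OF P PP] using M by simp
    qed
    have "M *\<^sub>v w = P *\<^sub>v (mat_diag k d *\<^sub>v (transpose_mat P *\<^sub>v w))"
      unfolding MP using mult3_vec[OF P mat_diag_dim Pt w] by simp
    also have "\<dots> = P *\<^sub>v (d i \<cdot>\<^sub>v unit_vec k i)" unfolding Ptw
    proof -
      have "mat_diag k d *\<^sub>v unit_vec k i = d i \<cdot>\<^sub>v unit_vec k i"
        by (subst mat_diag_mult_vec, auto intro!: eq_vecI simp: i)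
      thus "P *\<^sub>v (mat_diag k d *\<^sub>v unit_vec k i) = P *\<^sub>v (d i \<cdot>\<^sub>v unit_vec k i)" by simp
    qed
    also have "\<dots> = d i \<cdot>\<^sub>v w" unfolding w_def using P by (simp add: mult_mat_vec)
    finally show ?thesis .
  qed
  ultimately show ?thesis unfolding eigenvalue_def eigenvector_def using w M by auto
qed


lemma spec_diag_quad:
  fixes M P :: "real mat"
  assumes M: "M \<in> carrier_mat k k" and P: "P \<in> carrier_mat k k"
    and PP: "transpose_mat P * P = 1\<^sub>m k" and PM: "transpose_mat P * M * P = mat_diag k d"
    and i: "i < k"
  shows "(P *\<^sub>v unit_vec k i) \<bullet> (M *\<^sub>v (P *\<^sub>v unit_vec k i)) = d i"
    "(P *\<^sub>v unit_vec k i) \<bullet> (P *\<^sub>v unit_vec k i) = 1"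
proof -
  have Pt: "transpose_mat P \<in> carrier_mat k k" using P by auto
  have x: "P *\<^sub>v unit_vec k i \<in> carrier_vec k" using P by auto
  have Ptw: "transpose_mat P *\<^sub>v (P *\<^sub>v unit_vec k i) = unit_vec k i"
    using PP P Pt by (simp add: assoc_mult_mat_vec[symmetric, of _ k k _ k])
  have sq: "(\<Sum>j<k. f j * ((unit_vec k i :: real vec) $ j)^2) = f i" for f :: "nat \<Rightarrow> real"
    using i by (subst sum.remove[of _ i], auto)
  show "(P *\<^sub>v unit_vec k i) \<bullet> (M *\<^sub>v (P *\<^sub>v unit_vec k i)) = d i"
    unfolding spec_quad[OF M P PP PM x] Ptw by (rule sq)
  show "(P *\<^sub>v unit_vec k i) \<bullet> (P *\<^sub>v unit_vec k i) = 1"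
    unfolding spec_norm[OF P PP x] Ptw using sq[of "\<lambda>_. 1"] by simp
qed

lemma prod_list_upt: "prod_list (map f [0..<k]) = (\<Prod>i<k. f i)"
  by (induction k, auto simp: lessThan_Suc mult.commute)

lemma spec_det:
  fixes M P :: "real mat"
  assumes M: "M \<in> carrier_mat k k" and P: "P \<in> carrier_mat k k"
    and PP: "transpose_mat P * P = 1\<^sub>m k" and PM: "transpose_mat P * M * P = mat_diag k d"
  shows "det M = (\<Prod>i<k. d i)"
proof -
  have Pt: "transpose_mat P \<in> carrier_mat k k" using P by auto
  have "det (transpose_mat P) * det P = 1"
    using det_mult[OF Pt P] PP by simp
  hence "det M = det (transpose_mat P) * det M * det P" by (simp add: algebra_simps)
  also have "\<dots> = det (transpose_mat P * M * P)"
    using det_mult[OF Pt M] det_mult[of "transpose_mat P * M" k P] Pt M P by simp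
  also have "\<dots> = prod_list (diag_mat (mat_diag k d))" unfolding PM
    by (rule det_upper_triangular, auto simp: upper_triangular_def mat_diag_def)
  also have "\<dots> = (\<Prod>i<k. d i)" by (simp add: diag_mat_def mat_diag_def prod_list_upt)
  finally show ?thesis .
qed

lemma sym_lambda_bounds:
  fixes M :: "real mat"
  assumes M: "M \<in> carrier_mat k k" and sym: "transpose_mat M = M" and k: "k > 0"
    and x: "x \<in> carrier_vec k"
  shows "lambda_min M * (x \<bullet> x) \<le> x \<bullet> (M *\<^sub>v x)" "x \<bullet> (M *\<^sub>v x) \<le> lambda_max M * (x \<bullet> x)"
proof -
  obtain P d where P: "P \<in> carrier_mat k k" and PP: "transpose_mat P * P = 1\<^sub>m k"
    and PM: "transpose_mat P * M * P = mat_diag k d" using spectral[OF M sym] by auto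
  have E: "{e. eigenvalue M e} = d ` {..<k}"
    using spec_eig_in[OF M P PP PM] spec_eig_is[OF M P PP PM] by auto
  have fin: "finite {e. eigenvalue M e}" unfolding E by simp
  have mn: "lambda_min M \<le> d i" "d i \<le> lambda_max M" if "i < k" for i
    unfolding lambda_min_def lambda_max_def E using that by auto
  define y where "y = transpose_mat P *\<^sub>v x"
  have q: "x \<bullet> (M *\<^sub>v x) = (\<Sum>i<k. d i * (y $ i)^2)" unfolding y_def by (rule spec_quad[OF M P PP PM x])
  have nn: "x \<bullet> x = (\<Sum>i<k. (y $ i)^2)" unfolding y_def by (rule spec_norm[OF P PP x])
  show "lambda_min M * (x \<bullet> x) \<le> x \<bullet> (M *\<^sub>v x)" unfolding q nn sum_distrib_left
    by (rule sum_mono, rule mult_right_mono, auto simp: mn)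
  show "x \<bullet> (M *\<^sub>v x) \<le> lambda_max M * (x \<bullet> x)" unfolding q nn sum_distrib_left
    by (rule sum_mono, rule mult_right_mono, auto simp: mn)
qed

lemma det_lower_bound:
  fixes M :: "real mat"
  assumes M: "M \<in> carrier_mat k k" and sym: "transpose_mat M = M" and l: "l \<ge> 0"
    and lb: "\<And>x. x \<in> carrier_vec k \<Longrightarrow> l * (x \<bullet> x) \<le> x \<bullet> (M *\<^sub>v x)"
  shows "l ^ k \<le> det M"
proof -
  obtain P d where P: "P \<in> carrier_mat k k" and PP: "transpose_mat P * P = 1\<^sub>m k"
    and PM: "transpose_mat P * M * P = mat_diag k d" using spectral[OF M sym] by auto
  have di: "l \<le> d i" if "i < k" for i
    using lb[of "P *\<^sub>v unit_vec k i"] spec_diag_quad[OF M P PP PM that] P by auto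
  have "l ^ k = (\<Prod>i<k. l)" by simp
  also have "\<dots> \<le> (\<Prod>i<k. d i)" by (rule prod_mono, auto simp: l di)
  finally show ?thesis unfolding spec_det[OF M P PP PM] .
qed

lemma det_upper_bound:
  fixes M :: "real mat"
  assumes M: "M \<in> carrier_mat k k" and sym: "transpose_mat M = M"
    and lb: "\<And>x. x \<in> carrier_vec k \<Longrightarrow> 0 \<le> x \<bullet> (M *\<^sub>v x)"
    and ub: "\<And>x. x \<in> carrier_vec k \<Longrightarrow> x \<bullet> (M *\<^sub>v x) \<le> u * (x \<bullet> x)"
  shows "det M \<le> u ^ k"
proof -
  obtain P d where P: "P \<in> carrier_mat k k" and PP: "transpose_mat P * P = 1\<^sub>m k"
    and PM: "transpose_mat P * M * P = mat_diag k d" using spectral[OF M sym] by auto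
  have di: "0 \<le> d i" "d i \<le> u" if "i < k" for i
    using lb[of "P *\<^sub>v unit_vec k i"] ub[of "P *\<^sub>v unit_vec k i"] spec_diag_quad[OF M P PP PM that] P by auto
  have "(\<Prod>i<k. d i) \<le> (\<Prod>i<k. u)" by (rule prod_mono, auto simp: di)
  thus ?thesis unfolding spec_det[OF M P PP PM] by simp
qed


lemma sylvester_det:
  fixes A B :: "real mat"
  assumes A: "A \<in> carrier_mat n k" and B: "B \<in> carrier_mat k n"
  shows "det (1\<^sub>m n + A * B) = det (1\<^sub>m k + B * A)"
proof -
  define M where "M = four_block_mat (1\<^sub>m n) (- A) B (1\<^sub>m k)"
  define L where "L = four_block_mat (1\<^sub>m n) A (0\<^sub>m k n) (1\<^sub>m k)"
  have M: "M \<in> carrier_mat (n+k) (n+k)" unfolding M_def using A B by auto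
  have L: "L \<in> carrier_mat (n+k) (n+k)" unfolding L_def using A B by auto
  have detL: "det L = 1" unfolding L_def
    by (subst det_four_block_mat_lower_left_zero[of _ n _ k], insert A, auto)
  have MLe: "M * L = four_block_mat (1\<^sub>m n) (0\<^sub>m n k) B (1\<^sub>m k + B * A)"
    unfolding M_def L_def
    by (subst mult_four_block_mat, insert A B, auto simp: add.commute)
  have LMe: "L * M = four_block_mat (1\<^sub>m n + A * B) (0\<^sub>m n k) B (1\<^sub>m k)"
    unfolding M_def L_def
    by (subst mult_four_block_mat, insert A B, auto)
  have "det (M * L) = det (1\<^sub>m k + B * A)" unfolding MLe
    by (subst det_four_block_mat_upper_right_zero[of _ n _ k], insert A B, auto)
  moreover have "det (L * M) = det (1\<^sub>m n + A * B)" unfolding LMe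
    by (subst det_four_block_mat_upper_right_zero[of _ n _ k], insert A B, auto)
  moreover have "det (M * L) = det (L * M)" using det_mult[OF M L] det_mult[OF L M] by simp
  ultimately show ?thesis by simp
qed

lemma minv_unique:
  fixes A B :: "real mat"
  assumes A: "A \<in> carrier_mat m m" and B: "B \<in> carrier_mat m m"
    and AB: "A * B = 1\<^sub>m m" and BA: "B * A = 1\<^sub>m m"
  shows "minv A = B"
proof -
  have dr: "dim_row A = m" using A by auto
  have ex: "\<exists>C. C \<in> carrier_mat m m \<and> A * C = 1\<^sub>m m \<and> C * A = 1\<^sub>m m" using B AB BA by blast
  define C where "C = minv A"
  have C: "C \<in> carrier_mat m m" "A * C = 1\<^sub>m m" "C * A = 1\<^sub>m m"
    unfolding C_def minv_def dr using someI_ex[OF ex] by auto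
  have "C = C * (A * B)" using C AB by simp
  also have "\<dots> = (C * A) * B" by (rule assoc_mult_mat[symmetric], insert A B C, auto)
  also have "\<dots> = B" using C B by simp
  finally show ?thesis unfolding C_def .
qed

lemma inverse_exists:
  fixes A :: "real mat"
  assumes A: "A \<in> carrier_mat m m" and d: "det A \<noteq> 0"
  shows "\<exists>B. B \<in> carrier_mat m m \<and> A * B = 1\<^sub>m m \<and> B * A = 1\<^sub>m m"
  using det_non_zero_imp_unit[OF A d, of undefined]
  unfolding Units_def ring_mat_def by auto

lemma minv_props:
  fixes A :: "real mat"
  assumes A: "A \<in> carrier_mat m m" and d: "det A \<noteq> 0"
  shows "minv A \<in> carrier_mat m m" "A * minv A = 1\<^sub>m m" "minv A * A = 1\<^sub>m m"
  using inverse_exists[OF A d] minv_unique[OF A] by auto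

lemma qf_transform:
  fixes A Q :: "real mat"
  assumes A: "A \<in> carrier_mat m k" and Q: "Q \<in> carrier_mat m m" and v: "v \<in> carrier_vec k"
  shows "v \<bullet> ((transpose_mat A * Q * A) *\<^sub>v v) = (A *\<^sub>v v) \<bullet> (Q *\<^sub>v (A *\<^sub>v v))"
proof -
  have u: "Q *\<^sub>v (A *\<^sub>v v) \<in> carrier_vec m" using A Q v by auto
  have "(transpose_mat A * Q * A) *\<^sub>v v = transpose_mat A *\<^sub>v (Q *\<^sub>v (A *\<^sub>v v))"
  proof -
    have "(transpose_mat A * Q * A) *\<^sub>v v = (transpose_mat A * Q) *\<^sub>v (A *\<^sub>v v)"
      by (rule assoc_mult_mat_vec, insert A Q v, auto)
    also have "\<dots> = transpose_mat A *\<^sub>v (Q *\<^sub>v (A *\<^sub>v v))"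
      by (rule assoc_mult_mat_vec, insert A Q v, auto)
    finally show ?thesis .
  qed
  hence "v \<bullet> ((transpose_mat A * Q * A) *\<^sub>v v) = (transpose_mat A *\<^sub>v (Q *\<^sub>v (A *\<^sub>v v))) \<bullet> v"
    using comm_scalar_prod[of v k] A u v by auto
  also have "\<dots> = (Q *\<^sub>v (A *\<^sub>v v)) \<bullet> (A *\<^sub>v v)"
    by (rule transpose_vec_mult_scalar[OF A v u])
  also have "\<dots> = (A *\<^sub>v v) \<bullet> (Q *\<^sub>v (A *\<^sub>v v))"
    by (rule comm_scalar_prod[of _ m], insert A u v, auto)
  finally show ?thesis .
qed

lemma sym_quad_swap:
  fixes Q :: "real mat"
  assumes Q: "Q \<in> carrier_mat m m" and sym: "transpose_mat Q = Q"
    and x: "x \<in> carrier_vec m" and y: "y \<in> carrier_vec m"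
  shows "x \<bullet> (Q *\<^sub>v y) = (Q *\<^sub>v x) \<bullet> y"
  using transpose_vec_mult_scalar[OF Q y x] sym by simp

lemma sym_idem_quad:
  fixes Q :: "real mat"
  assumes Q: "Q \<in> carrier_mat m m" and sym: "transpose_mat Q = Q" and idem: "Q * Q = Q"
    and x: "x \<in> carrier_vec m"
  shows "x \<bullet> (Q *\<^sub>v x) = (Q *\<^sub>v x) \<bullet> (Q *\<^sub>v x)" "x \<bullet> (Q *\<^sub>v x) \<ge> 0"
proof -
  have "Q *\<^sub>v x = Q *\<^sub>v (Q *\<^sub>v x)" using assoc_mult_mat_vec[OF Q Q x] idem by simp
  hence "x \<bullet> (Q *\<^sub>v x) = x \<bullet> (Q *\<^sub>v (Q *\<^sub>v x))" by simp
  also have "\<dots> = (Q *\<^sub>v x) \<bullet> (Q *\<^sub>v x)" by (rule sym_quad_swap[OF Q sym x], insert Q x, auto)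
  finally show "x \<bullet> (Q *\<^sub>v x) = (Q *\<^sub>v x) \<bullet> (Q *\<^sub>v x)" .
  thus "x \<bullet> (Q *\<^sub>v x) \<ge> 0" using conjugate_square_ge_0_vec[of "Q *\<^sub>v x"] Q x by auto
qed


context
  fixes K Gi :: "real mat" and n :: nat
  assumes K: "K \<in> carrier_mat n n" and Ksym: "transpose_mat K = K"
    and Kpsd: "\<And>x. x \<in> carrier_vec n \<Longrightarrow> 0 \<le> x \<bullet> (K *\<^sub>v x)"
    and Gi: "Gi \<in> carrier_mat n n" and GGi: "(1\<^sub>m n + K) * Gi = 1\<^sub>m n"
    and GiG: "Gi * (1\<^sub>m n + K) = 1\<^sub>m n"
begin

lemma ginv_sym: "transpose_mat Gi = Gi"
proof -
  have G: "1\<^sub>m n + K \<in> carrier_mat n n" using K by auto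
  have Gt: "transpose_mat (1\<^sub>m n + K) = 1\<^sub>m n + K" using transpose_add[of "1\<^sub>m n" n n K] K Ksym by simp
  have "transpose_mat ((1\<^sub>m n + K) * Gi) = 1\<^sub>m n" using GGi by simp
  hence GtG: "transpose_mat Gi * (1\<^sub>m n + K) = 1\<^sub>m n" using transpose_mult[OF G Gi] Gt by simp
  have "transpose_mat Gi = transpose_mat Gi * ((1\<^sub>m n + K) * Gi)" using GGi Gi by simp
  also have "\<dots> = (transpose_mat Gi * (1\<^sub>m n + K)) * Gi"
    by (rule assoc_mult_mat[symmetric], insert G Gi, auto)
  also have "\<dots> = Gi" using GtG Gi by simp
  finally show ?thesis .
qed

lemma ginv_basic:
  assumes y: "y \<in> carrier_vec n"
  defines "w \<equiv> Gi *\<^sub>v y"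
  shows "y = w + K *\<^sub>v w" "y \<bullet> (Gi *\<^sub>v y) = w \<bullet> w + w \<bullet> (K *\<^sub>v w)"
    "y \<bullet> y = w \<bullet> w + 2 * (w \<bullet> (K *\<^sub>v w)) + (K *\<^sub>v w) \<bullet> (K *\<^sub>v w)"
proof -
  have w: "w \<in> carrier_vec n" unfolding w_def using Gi y by auto
  have Kw: "K *\<^sub>v w \<in> carrier_vec n" using K w by auto
  have "y = ((1\<^sub>m n + K) * Gi) *\<^sub>v y" using GGi y by simp
  also have "\<dots> = (1\<^sub>m n + K) *\<^sub>v w" unfolding w_def by (rule assoc_mult_mat_vec, insert K Gi y, auto)
  also have "\<dots> = w + K *\<^sub>v w" using K w by (simp add: add_mult_distrib_mat_vec[of _ n n])
  finally show yw: "y = w + K *\<^sub>v w" .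
  have c: "(K *\<^sub>v w) \<bullet> w = w \<bullet> (K *\<^sub>v w)" by (rule comm_scalar_prod[of _ n], insert Kw w, auto)
  show "y \<bullet> (Gi *\<^sub>v y) = w \<bullet> w + w \<bullet> (K *\<^sub>v w)"
    unfolding w_def[symmetric] apply (subst (1) yw)
    using add_scalar_prod_distrib[OF w Kw w] c by simp
  show "y \<bullet> y = w \<bullet> w + 2 * (w \<bullet> (K *\<^sub>v w)) + (K *\<^sub>v w) \<bullet> (K *\<^sub>v w)"
    apply (subst (1 2) yw)
    using add_scalar_prod_distrib[OF w Kw "add_carrier_vec"[OF w Kw]]
      scalar_prod_add_distrib[OF w w Kw] scalar_prod_add_distrib[OF Kw w Kw] c by simp
qed

lemma ginv_le: assumes y: "y \<in> carrier_vec n" shows "y \<bullet> (Gi *\<^sub>v y) \<le> y \<bullet> y"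
proof -
  have w: "Gi *\<^sub>v y \<in> carrier_vec n" using Gi y by auto
  have "0 \<le> (K *\<^sub>v (Gi *\<^sub>v y)) \<bullet> (K *\<^sub>v (Gi *\<^sub>v y))"
    using conjugate_square_ge_0_vec[of "K *\<^sub>v (Gi *\<^sub>v y)"] by simp
  thus ?thesis using ginv_basic[OF y] Kpsd[OF w] by linarith
qed

lemma ginv_ge_w: assumes y: "y \<in> carrier_vec n" shows "(Gi *\<^sub>v y) \<bullet> (Gi *\<^sub>v y) \<le> y \<bullet> (Gi *\<^sub>v y)"
proof -
  have w: "Gi *\<^sub>v y \<in> carrier_vec n" using Gi y by auto
  show ?thesis using ginv_basic[OF y] Kpsd[OF w] by linarith
qed

lemma ginv_ge: assumes y: "y \<in> carrier_vec n" shows "0 \<le> y \<bullet> (Gi *\<^sub>v y)"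
  using ginv_ge_w[OF y] conjugate_square_ge_0_vec[of "Gi *\<^sub>v y"] by simp

lemma ginv_proj:
  assumes Q: "Q \<in> carrier_mat n n" and Qsym: "transpose_mat Q = Q" and Qid: "Q * Q = Q"
    and QK: "Q * K = 0\<^sub>m n n" and y: "y \<in> carrier_vec n"
  shows "y \<bullet> (Q *\<^sub>v y) \<le> y \<bullet> (Gi *\<^sub>v y)"
proof -
  define w where "w = Gi *\<^sub>v y"
  have w: "w \<in> carrier_vec n" unfolding w_def using Gi y by auto
  have Kw: "K *\<^sub>v w \<in> carrier_vec n" using K w by auto
  have Qy: "Q *\<^sub>v y = Q *\<^sub>v w"
  proof -
    have "Q *\<^sub>v y = Q *\<^sub>v (w + K *\<^sub>v w)" using ginv_basic(1)[OF y] unfolding w_def by simp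
    also have "\<dots> = Q *\<^sub>v w + Q *\<^sub>v (K *\<^sub>v w)" using Q w Kw by (simp add: mult_add_distrib_mat_vec[of _ n n])
    also have "Q *\<^sub>v (K *\<^sub>v w) = (Q * K) *\<^sub>v w" by (rule assoc_mult_mat_vec[symmetric], insert Q K w, auto)
    also have "\<dots> = 0\<^sub>v n" unfolding QK using w by auto
    finally show ?thesis using Q w by simp
  qed
  have "y \<bullet> (Q *\<^sub>v y) = (Q *\<^sub>v w) \<bullet> (Q *\<^sub>v w)" using sym_idem_quad(1)[OF Q Qsym Qid y] Qy by simp
  also have "\<dots> = w \<bullet> (Q *\<^sub>v w)" using sym_idem_quad(1)[OF Q Qsym Qid w] by simp
  also have "\<dots> \<le> w \<bullet> w"
  proof -
    define R where "R = 1\<^sub>m n - Q"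
    have R: "R \<in> carrier_mat n n" unfolding R_def using Q by auto
    have Rsym: "transpose_mat R = R" unfolding R_def using transpose_minus[of "1\<^sub>m n" n n Q] Q Qsym by simp
    have Rid: "R * R = R"
    proof -
      have "R * R = 1\<^sub>m n * R - Q * R" unfolding R_def
        by (rule minus_mult_distrib_mat, insert Q, auto)
      also have "Q * R = Q * 1\<^sub>m n - Q * Q" unfolding R_def
        by (rule mult_minus_distrib_mat, insert Q, auto)
      also have "\<dots> = 0\<^sub>m n n" using Q Qid by simp
      also have "1\<^sub>m n * R - 0\<^sub>m n n = R" using R by (intro eq_matI, auto)
      finally show ?thesis .
    qed
    have "w \<bullet> (R *\<^sub>v w) = w \<bullet> w - w \<bullet> (Q *\<^sub>v w)" unfolding R_def
      using Q w by (simp add: minus_mult_distrib_mat_vec[of _ n n] scalar_prod_minus_distrib[of _ n])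
    thus ?thesis using sym_idem_quad(2)[OF R Rsym Rid w] by linarith
  qed
  also have "\<dots> \<le> y \<bullet> (Gi *\<^sub>v y)" using ginv_ge_w[OF y] unfolding w_def .
  finally show ?thesis .
qed

end


lemma inv_sym:
  fixes A B :: "real mat"
  assumes A: "A \<in> carrier_mat m m" and B: "B \<in> carrier_mat m m" and sym: "transpose_mat A = A"
    and AB: "A * B = 1\<^sub>m m" and BA: "B * A = 1\<^sub>m m"
  shows "transpose_mat B = B"
proof -
  have "transpose_mat (A * B) = 1\<^sub>m m" using AB by simp
  hence BtA: "transpose_mat B * A = 1\<^sub>m m" using transpose_mult[OF A B] sym by simp
  have "transpose_mat B = transpose_mat B * (A * B)" using AB B by simp
  also have "\<dots> = (transpose_mat B * A) * B" by (rule assoc_mult_mat[symmetric], insert A B, auto)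
  also have "\<dots> = B" using BtA B by simp
  finally show ?thesis .
qed

lemma pick_bij: assumes "finite S" shows "bij_betw (pick S) {..<card S} S"
proof -
  have inj: "inj_on (pick S) {..<card S}"
  proof (rule inj_onI)
    fix a b assume a: "a \<in> {..<card S}" and b: "b \<in> {..<card S}" and eq: "pick S a = pick S b"
    show "a = b"
    proof (rule ccontr)
      assume "a \<noteq> b"
      hence "a < b \<or> b < a" by auto
      thus False using pick_mono[of b S a] pick_mono[of a S b] a b eq by auto
    qed
  qed
  have sub: "pick S ` {..<card S} \<subseteq> S" using pick_in_set by auto
  have "card (pick S ` {..<card S}) = card S" using card_image[OF inj] by simp
  hence "pick S ` {..<card S} = S" using card_subset_eq[OF assms sub] by simp
  thus ?thesis using inj unfolding bij_betw_def by auto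
qed

definition Zm :: "real mat \<Rightarrow> (nat \<Rightarrow> real) \<Rightarrow> nat set \<Rightarrow> real mat" where
  "Zm X c \<gamma> = Xsub X \<gamma> * Sigma_pow c (1/2) \<gamma>"

definition Km :: "real mat \<Rightarrow> (nat \<Rightarrow> real) \<Rightarrow> nat set \<Rightarrow> real mat" where
  "Km X c \<gamma> = mat (dim_row X) (dim_row X) (\<lambda>(i,l). \<Sum>j\<in>\<gamma>. c j * X $$ (i,j) * X $$ (l,j))"

locale model =
  fixes X :: "real mat" and n p :: nat and c :: "nat \<Rightarrow> real"
  assumes X: "X \<in> carrier_mat n p" and cpos: "\<And>j. j < p \<Longrightarrow> c j > 0"
begin

lemma Xsub_carrier: assumes g: "\<gamma> \<subseteq> {..<p}" shows "Xsub X \<gamma> \<in> carrier_mat n (card \<gamma>)"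
proof -
  have "{j. j < dim_col X \<and> j \<in> \<gamma>} = \<gamma>" using g X by auto
  moreover have "{i. i < dim_row X \<and> i \<in> UNIV} = {..<n}" using X by auto
  ultimately show ?thesis unfolding Xsub_def carrier_mat_def by (simp add: dim_submatrix)
qed

lemma Xsub_index: assumes g: "\<gamma> \<subseteq> {..<p}" and i: "i < n" and t: "t < card \<gamma>"
  shows "Xsub X \<gamma> $$ (i,t) = X $$ (i, pick \<gamma> t)"
proof -
  have "{j. j < dim_col X \<and> j \<in> \<gamma>} = \<gamma>" using g X by auto
  moreover have "{i. i < dim_row X \<and> i \<in> UNIV} = {..<n}" using X by auto
  ultimately show ?thesis unfolding Xsub_def using i t by (simp add: submatrix_index pick_UNIV)
qed

lemma pick_lt: assumes g: "\<gamma> \<subseteq> {..<p}" and t: "t < card \<gamma>" shows "pick \<gamma> t < p"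
  using pick_in_set[of t \<gamma>] t g by auto

lemma Sigma_pow_half: assumes g: "\<gamma> \<subseteq> {..<p}"
  shows "Sigma_pow c (1/2) \<gamma> = mat_diag (card \<gamma>) (\<lambda>i. sqrt (c (pick \<gamma> i)))"
  unfolding Sigma_pow_def mat_diag_def
  by (rule eq_matI, auto simp: powr_half_sqrt cpos pick_lt[OF g] less_imp_le)

lemma minv_Sigma: assumes g: "\<gamma> \<subseteq> {..<p}"
  shows "minv (Sigma c \<gamma>) = mat_diag (card \<gamma>) (\<lambda>i. 1 / c (pick \<gamma> i))"
proof (rule minv_unique[of _ "card \<gamma>"])
  have cp: "i < card \<gamma> \<Longrightarrow> c (pick \<gamma> i) \<noteq> 0" for i using cpos[OF pick_lt[OF g]] by force
  show "Sigma c \<gamma> * mat_diag (card \<gamma>) (\<lambda>i. 1 / c (pick \<gamma> i)) = 1\<^sub>m (card \<gamma>)"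
    unfolding Sigma_def mat_diag_diag by (rule eq_matI, auto simp: mat_diag_def cp)
  show "mat_diag (card \<gamma>) (\<lambda>i. 1 / c (pick \<gamma> i)) * Sigma c \<gamma> = 1\<^sub>m (card \<gamma>)"
    unfolding Sigma_def mat_diag_diag by (rule eq_matI, auto simp: mat_diag_def cp)
qed (auto simp: Sigma_def)

lemma Zm_carrier: assumes g: "\<gamma> \<subseteq> {..<p}" shows "Zm X c \<gamma> \<in> carrier_mat n (card \<gamma>)"
  unfolding Zm_def using Xsub_carrier[OF g] by (simp add: Sigma_pow_def)

lemma Wmat_eq: assumes g: "\<gamma> \<subseteq> {..<p}"
  shows "Wmat X c \<gamma> = 1\<^sub>m (card \<gamma>) + transpose_mat (Zm X c \<gamma>) * Zm X c \<gamma>"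
proof -
  let ?k = "card \<gamma>"
  define S where "S = Sigma_pow c (1/2) \<gamma>"
  define XA where "XA = Xsub X \<gamma>"
  have S: "S \<in> carrier_mat ?k ?k" unfolding S_def Sigma_pow_def by simp
  have XA: "XA \<in> carrier_mat n ?k" unfolding XA_def by (rule Xsub_carrier[OF g])
  define Si where "Si = minv (Sigma c \<gamma>)"
  have Si: "Si \<in> carrier_mat ?k ?k" unfolding Si_def minv_Sigma[OF g] by simp
  have XX: "transpose_mat XA * XA \<in> carrier_mat ?k ?k" using XA by auto
  have St: "transpose_mat S = S" unfolding S_def Sigma_pow_def mat_diag_def by (rule eq_matI, auto)
  have cp: "i < ?k \<Longrightarrow> c (pick \<gamma> i) > 0" for i using cpos[OF pick_lt[OF g]] by force
  have SSiS: "S * Si * S = 1\<^sub>m ?k" unfolding S_def Si_def minv_Sigma[OF g] Sigma_pow_half[OF g] mat_diag_diag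
    using cp by (intro eq_matI, auto simp: mat_diag_def less_imp_le real_sqrt_mult[symmetric], fastforce)
  have "Wmat X c \<gamma> = S * (Si + transpose_mat XA * XA) * S"
    unfolding Wmat_def Umat_def S_def Si_def XA_def ..
  also have "\<dots> = (S * Si + S * (transpose_mat XA * XA)) * S"
    by (subst mult_add_distrib_mat[of _ ?k ?k], insert S Si XX, auto)
  also have "\<dots> = S * Si * S + S * (transpose_mat XA * XA) * S"
    by (subst add_mult_distrib_mat[of _ ?k ?k], insert S Si XX, auto)
  also have "S * (transpose_mat XA * XA) * S = transpose_mat (XA * S) * (XA * S)"
  proof -
    have "transpose_mat (XA * S) = S * transpose_mat XA" using transpose_mult[OF XA S] St by simp
    have "S * (transpose_mat XA * XA) * S = S * ((transpose_mat XA * XA) * S)"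
      by (rule assoc_mult_mat, insert S XA, auto)
    also have "(transpose_mat XA * XA) * S = transpose_mat XA * (XA * S)"
      by (rule assoc_mult_mat, insert S XA, auto)
    also have "S * (transpose_mat XA * (XA * S)) = (S * transpose_mat XA) * (XA * S)"
      by (rule assoc_mult_mat[symmetric], insert S XA, auto)
    finally show ?thesis using \<open>transpose_mat (XA * S) = S * transpose_mat XA\<close> by simp
  qed
  finally show ?thesis unfolding SSiS unfolding Zm_def S_def XA_def .
qed

lemma ZZt_eq: assumes g: "\<gamma> \<subseteq> {..<p}"
  shows "Zm X c \<gamma> * transpose_mat (Zm X c \<gamma>) = Km X c \<gamma>"
proof (rule eq_matI)
  let ?k = "card \<gamma>"
  have fin: "finite \<gamma>" using g finite_subset by blast
  have Z: "Zm X c \<gamma> \<in> carrier_mat n ?k" by (rule Zm_carrier[OF g])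
  have Zij: "Zm X c \<gamma> $$ (i,t) = X $$ (i, pick \<gamma> t) * sqrt (c (pick \<gamma> t))" if "i < n" "t < ?k" for i t
    unfolding Zm_def Sigma_pow_half[OF g]
    using mat_diag_mult_right[OF Xsub_carrier[OF g]] Xsub_index[OF g that] that by simp
  have cp: "t < ?k \<Longrightarrow> c (pick \<gamma> t) > 0" for t using cpos[OF pick_lt[OF g]] by force
  fix i l assume "i < dim_row (Km X c \<gamma>)" "l < dim_col (Km X c \<gamma>)"
  hence i: "i < n" and l: "l < n" unfolding Km_def using X by auto
  have "(Zm X c \<gamma> * transpose_mat (Zm X c \<gamma>)) $$ (i,l) = row (Zm X c \<gamma>) i \<bullet> row (Zm X c \<gamma>) l"
    using Z i l by simp
  also have "\<dots> = (\<Sum>t<?k. Zm X c \<gamma> $$ (i,t) * Zm X c \<gamma> $$ (l,t))"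
    unfolding scalar_prod_def using Z i l by (simp add: lessThan_atLeast0)
  also have "\<dots> = (\<Sum>t<?k. c (pick \<gamma> t) * X $$ (i, pick \<gamma> t) * X $$ (l, pick \<gamma> t))"
  proof (rule sum.cong[OF refl])
    fix t assume "t \<in> {..<?k}"
    hence t: "t < ?k" by simp
    have "sqrt (c (pick \<gamma> t)) * sqrt (c (pick \<gamma> t)) = c (pick \<gamma> t)"
      using cp[OF t] by simp
    thus "Zm X c \<gamma> $$ (i,t) * Zm X c \<gamma> $$ (l,t) = c (pick \<gamma> t) * X $$ (i, pick \<gamma> t) * X $$ (l, pick \<gamma> t)"
      unfolding Zij[OF i t] Zij[OF l t] by (simp add: algebra_simps)
  qed
  also have "\<dots> = (\<Sum>j\<in>\<gamma>. c j * X $$ (i,j) * X $$ (l,j))"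
    by (rule sum.reindex_bij_betw[OF pick_bij[OF fin], of "\<lambda>j. c j * X $$ (i,j) * X $$ (l,j)"])
  also have "\<dots> = Km X c \<gamma> $$ (i,l)" unfolding Km_def using X i l by simp
  finally show "(Zm X c \<gamma> * transpose_mat (Zm X c \<gamma>)) $$ (i,l) = Km X c \<gamma> $$ (i,l)" .
qed (insert X Zm_carrier[OF g], auto simp: Km_def)

lemma Km_carrier: "Km X c \<gamma> \<in> carrier_mat n n" unfolding Km_def using X by auto

lemma Km_union: assumes "finite A" "finite D" "A \<inter> D = {}"
  shows "Km X c (A \<union> D) = Km X c A + Km X c D"
  unfolding Km_def by (rule eq_matI, auto simp: sum.union_disjoint assms)

lemma Km_empty: "Km X c {} = 0\<^sub>m n n" unfolding Km_def using X by (intro eq_matI, auto)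

lemma Km_sym: "transpose_mat (Km X c \<gamma>) = Km X c \<gamma>"
  unfolding Km_def by (rule eq_matI, auto simp: mult.commute mult.left_commute)

lemma Km_psd: assumes g: "\<gamma> \<subseteq> {..<p}" and x: "x \<in> carrier_vec n"
  shows "0 \<le> x \<bullet> (Km X c \<gamma> *\<^sub>v x)"
proof -
  have Z: "Zm X c \<gamma> \<in> carrier_mat n (card \<gamma>)" by (rule Zm_carrier[OF g])
  have "x \<bullet> (Km X c \<gamma> *\<^sub>v x) = x \<bullet> (Zm X c \<gamma> *\<^sub>v (transpose_mat (Zm X c \<gamma>) *\<^sub>v x))"
    unfolding ZZt_eq[OF g, symmetric] using Z x by simp
  also have "\<dots> = (transpose_mat (Zm X c \<gamma>) *\<^sub>v x) \<bullet> (transpose_mat (Zm X c \<gamma>) *\<^sub>v x)"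
    by (rule transpose_vec_mult_scalar[symmetric], insert Z x, auto)
  also have "\<dots> \<ge> 0" using conjugate_square_ge_0_vec[of "transpose_mat (Zm X c \<gamma>) *\<^sub>v x"] by simp
  finally show ?thesis .
qed

lemma det_Wmat: assumes g: "\<gamma> \<subseteq> {..<p}"
  shows "det (Wmat X c \<gamma>) = det (1\<^sub>m n + Km X c \<gamma>)"
  unfolding Wmat_eq[OF g] ZZt_eq[OF g, symmetric]
  by (rule sylvester_det[symmetric], insert Zm_carrier[OF g], auto)

end


lemma smult_mat_vec: assumes A: "A \<in> carrier_mat k k" and s: "s \<in> carrier_vec k"
  shows "(a \<cdot>\<^sub>m A) *\<^sub>v s = a \<cdot>\<^sub>v (A *\<^sub>v s)"
  by (rule eq_vecI, insert A s, auto simp: scalar_prod_def sum_distrib_left mult.assoc)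

lemma transpose_smult: "transpose_mat (a \<cdot>\<^sub>m A) = a \<cdot>\<^sub>m transpose_mat A"
  by (rule eq_matI, auto)

lemma sym_mid: fixes B Q :: "real mat" assumes B: "B \<in> carrier_mat m k" and Q: "Q \<in> carrier_mat m m" and Qs: "transpose_mat Q = Q"
  shows "transpose_mat (transpose_mat B * Q * B) = transpose_mat B * Q * B"
proof -
  have "transpose_mat (transpose_mat B * Q * B) = transpose_mat B * transpose_mat (transpose_mat B * Q)"
    by (rule transpose_mult, insert B Q, auto)
  also have "transpose_mat (transpose_mat B * Q) = transpose_mat Q * B"
    by (subst transpose_mult, insert B Q, auto)
  also have "transpose_mat B * (transpose_mat Q * B) = transpose_mat B * Q * B"
    unfolding Qs by (rule assoc_mult_mat[symmetric], insert B Q, auto)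
  finally show ?thesis .
qed

context model
begin

lemma G_quad: assumes g: "A \<subseteq> {..<p}" and x: "x \<in> carrier_vec n"
  shows "x \<bullet> ((1\<^sub>m n + Km X c A) *\<^sub>v x) = x \<bullet> x + x \<bullet> (Km X c A *\<^sub>v x)"
proof -
  have K: "Km X c A \<in> carrier_mat n n" by (rule Km_carrier)
  have "(1\<^sub>m n + Km X c A) *\<^sub>v x = x + Km X c A *\<^sub>v x"
    using K x by (simp add: add_mult_distrib_mat_vec[of _ n n])
  thus ?thesis using scalar_prod_add_distrib[of x n x "Km X c A *\<^sub>v x"] K x by simp
qed

lemma G_sym: "transpose_mat (1\<^sub>m n + Km X c A) = 1\<^sub>m n + Km X c A"
  using transpose_add[of "1\<^sub>m n" n n "Km X c A"] Km_carrier Km_sym by simp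

lemma G_det: assumes g: "A \<subseteq> {..<p}" shows "det (1\<^sub>m n + Km X c A) \<ge> 1"
proof -
  have "1 ^ n \<le> det (1\<^sub>m n + Km X c A)"
    by (rule det_lower_bound[OF _ G_sym], insert Km_carrier G_quad[OF g] Km_psd[OF g], auto)
  thus ?thesis by simp
qed

lemma G_inv: assumes g: "A \<subseteq> {..<p}"
  shows "\<exists>Gi. Gi \<in> carrier_mat n n \<and> (1\<^sub>m n + Km X c A) * Gi = 1\<^sub>m n \<and> Gi * (1\<^sub>m n + Km X c A) = 1\<^sub>m n"
  by (rule inverse_exists, insert Km_carrier G_det[OF g], auto)

lemma split_det:
  assumes A: "A \<subseteq> {..<p}" and D: "D \<subseteq> {..<p}" and AD: "A \<inter> D = {}"
    and Gi: "Gi \<in> carrier_mat n n" and GGi: "(1\<^sub>m n + Km X c A) * Gi = 1\<^sub>m n"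
  shows "det (1\<^sub>m n + Km X c (A \<union> D)) =
    det (1\<^sub>m n + Km X c A) * det (1\<^sub>m (card D) + transpose_mat (Zm X c D) * Gi * Zm X c D)"
proof -
  let ?G = "1\<^sub>m n + Km X c A"
  let ?Z = "Zm X c D"
  let ?k = "card D"
  have G: "?G \<in> carrier_mat n n" using Km_carrier by auto
  have Z: "?Z \<in> carrier_mat n ?k" by (rule Zm_carrier[OF D])
  have finA: "finite A" and finD: "finite D" using A D finite_subset by auto
  have ZZ: "?Z * transpose_mat ?Z \<in> carrier_mat n n" using Z by auto
  have "1\<^sub>m n + Km X c (A \<union> D) = ?G + ?Z * transpose_mat ?Z"
    unfolding Km_union[OF finA finD AD] ZZt_eq[OF D]
    using Km_carrier by (simp add: assoc_add_mat[symmetric, of _ n n])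
  also have "\<dots> = ?G * (1\<^sub>m n + (Gi * ?Z) * transpose_mat ?Z)"
  proof -
    have "?G * (1\<^sub>m n + (Gi * ?Z) * transpose_mat ?Z) = ?G * 1\<^sub>m n + ?G * ((Gi * ?Z) * transpose_mat ?Z)"
      by (rule mult_add_distrib_mat, insert G Gi Z, auto)
    also have "?G * ((Gi * ?Z) * transpose_mat ?Z) = ((?G * Gi) * ?Z) * transpose_mat ?Z"
      using G Gi Z by (simp add: assoc_mult_mat[of _ n n _ n _ ?k] assoc_mult_mat[of _ n n _ ?k _ n]
          assoc_mult_mat[of _ n ?k _ n])
    moreover have "?G * 1\<^sub>m n = ?G" by (rule right_mult_one_mat[OF G])
    ultimately show ?thesis unfolding GGi using G Z by simp
  qed
  finally have "det (1\<^sub>m n + Km X c (A \<union> D)) = det ?G * det (1\<^sub>m n + (Gi * ?Z) * transpose_mat ?Z)"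
    using det_mult[OF G, of "1\<^sub>m n + (Gi * ?Z) * transpose_mat ?Z"] Gi Z by auto
  also have "det (1\<^sub>m n + (Gi * ?Z) * transpose_mat ?Z) = det (1\<^sub>m ?k + transpose_mat ?Z * (Gi * ?Z))"
    by (rule sylvester_det, insert Gi Z, auto)
  also have "transpose_mat ?Z * (Gi * ?Z) = transpose_mat ?Z * Gi * ?Z"
    by (rule assoc_mult_mat[symmetric], insert Gi Z, auto)
  finally show ?thesis .
qed

lemma R_facts:
  assumes A: "A \<subseteq> {..<p}" and D: "D \<subseteq> {..<p}"
    and Gi: "Gi \<in> carrier_mat n n" and GGi: "(1\<^sub>m n + Km X c A) * Gi = 1\<^sub>m n"
    and GiG: "Gi * (1\<^sub>m n + Km X c A) = 1\<^sub>m n"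
  defines "R \<equiv> 1\<^sub>m (card D) + transpose_mat (Zm X c D) * Gi * Zm X c D"
  shows "R \<in> carrier_mat (card D) (card D)" "transpose_mat R = R"
    "\<And>v :: real vec. v \<in> carrier_vec (card D) \<Longrightarrow>
       v \<bullet> (R *\<^sub>v v) = v \<bullet> v + (Zm X c D *\<^sub>v v) \<bullet> (Gi *\<^sub>v (Zm X c D *\<^sub>v v))"
proof -
  let ?Z = "Zm X c D"
  let ?k = "card D"
  have Z: "?Z \<in> carrier_mat n ?k" by (rule Zm_carrier[OF D])
  have Gis: "transpose_mat Gi = Gi"
    by (rule ginv_sym[OF Km_carrier Km_sym Km_psd[OF A] Gi GGi GiG])
  have M: "transpose_mat ?Z * Gi * ?Z \<in> carrier_mat ?k ?k" using Z Gi by auto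
  show "R \<in> carrier_mat ?k ?k" unfolding R_def using M by auto
  show "transpose_mat R = R" unfolding R_def
    using transpose_add[of "1\<^sub>m ?k" ?k ?k "transpose_mat ?Z * Gi * ?Z"] M sym_mid[OF Z Gi Gis] by simp
  fix v :: "real vec" assume v: "v \<in> carrier_vec ?k"
  show "v \<bullet> (R *\<^sub>v v) = v \<bullet> v + (?Z *\<^sub>v v) \<bullet> (Gi *\<^sub>v (?Z *\<^sub>v v))"
    unfolding R_def qf_transform[OF Z Gi v, symmetric] using M v
    by (simp add: add_mult_distrib_mat_vec[of _ ?k ?k] scalar_prod_add_distrib[of _ ?k])
qed

end


lemma compl_proj:
  fixes P :: "real mat"
  assumes P: "P \<in> carrier_mat n n" and Ps: "transpose_mat P = P" and Pid: "P * P = P"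
  shows "1\<^sub>m n - P \<in> carrier_mat n n" "transpose_mat (1\<^sub>m n - P) = 1\<^sub>m n - P"
    "(1\<^sub>m n - P) * (1\<^sub>m n - P) = 1\<^sub>m n - P"
proof -
  let ?R = "1\<^sub>m n - P"
  show R: "?R \<in> carrier_mat n n" using P by auto
  show "transpose_mat ?R = ?R" using transpose_minus[of "1\<^sub>m n" n n P] P Ps by simp
  have "?R * ?R = 1\<^sub>m n * ?R - P * ?R"
    by (rule minus_mult_distrib_mat, insert P, auto)
  also have "P * ?R = P * 1\<^sub>m n - P * P"
    by (rule mult_minus_distrib_mat, insert P, auto)
  also have "\<dots> = 0\<^sub>m n n" using P Pid by simp
  also have "1\<^sub>m n * ?R = ?R" by (rule left_mult_one_mat[OF R])
  also have "?R - 0\<^sub>m n n = ?R" using R P by (intro eq_matI, auto)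
  finally show "?R * ?R = ?R" .
qed

context model
begin

lemma proj_facts:
  assumes g: "A \<subseteq> {..<p}" and inv: "invertible_mat (transpose_mat (Xsub X A) * Xsub X A)"
  shows "Proj X A \<in> carrier_mat n n" "transpose_mat (Proj X A) = Proj X A"
    "Proj X A * Proj X A = Proj X A" "Proj X A * Km X c A = Km X c A"
proof -
  have "Proj X A \<in> carrier_mat n n \<and> transpose_mat (Proj X A) = Proj X A \<and>
    Proj X A * Proj X A = Proj X A \<and> Proj X A * Km X c A = Km X c A"
  proof (cases "A = {}")
    case True
    thus ?thesis unfolding Proj_def using X by (auto simp: Km_empty)
  next
    case False
    let ?k = "card A"
    define XA where "XA = Xsub X A"
    have XA: "XA \<in> carrier_mat n ?k" unfolding XA_def by (rule Xsub_carrier[OF g])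
    have XAt: "transpose_mat XA \<in> carrier_mat ?k n" using XA by auto
    define N where "N = transpose_mat XA * XA"
    have N: "N \<in> carrier_mat ?k ?k" unfolding N_def using XA by auto
    from inv[folded XA_def, folded N_def] obtain B where NB': "N * B = 1\<^sub>m (dim_row N)"
      and BN': "B * N = 1\<^sub>m (dim_row B)"
      unfolding invertible_mat_def inverts_mat_def by auto
    have dB: "dim_row B = ?k" using arg_cong[OF BN', of dim_col] N by simp
    have NB: "N * B = 1\<^sub>m ?k" using NB' N by simp
    have BN: "B * N = 1\<^sub>m ?k" using BN' dB by simp
    have B: "B \<in> carrier_mat ?k ?k"
    proof -
      have "dim_col B = ?k" using arg_cong[OF NB, of dim_col] by simp
      thus ?thesis using dB by auto
    qed
    have minvN: "minv N = B" by (rule minv_unique[OF N B NB BN])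
    have Ns: "transpose_mat N = N" unfolding N_def using transpose_mult[OF XAt XA] by simp
    have Bs: "transpose_mat B = B" by (rule inv_sym[OF N B Ns NB BN])
    define P where "P = XA * B * transpose_mat XA"
    have PP: "Proj X A = P" unfolding Proj_def P_def XA_def N_def using False minvN
      by (simp add: XA_def N_def)
    have P: "P \<in> carrier_mat n n" unfolding P_def using XA B by auto
    have XB: "XA * B \<in> carrier_mat n ?k" using XA B by auto
    have Pt: "transpose_mat P = P"
    proof -
      have "transpose_mat P = transpose_mat (transpose_mat XA) * transpose_mat (XA * B)"
        unfolding P_def by (rule transpose_mult[OF XB XAt])
      also have "transpose_mat (XA * B) = B * transpose_mat XA" using transpose_mult[OF XA B] Bs by simp
      also have "transpose_mat (transpose_mat XA) * (B * transpose_mat XA) = P"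
        unfolding P_def by (simp, rule assoc_mult_mat[symmetric], insert XA B, auto)
      finally show ?thesis .
    qed
    have PX: "P * XA = XA"
    proof -
      have "P * XA = (XA * B) * N" unfolding P_def N_def
        by (rule assoc_mult_mat, insert XB XAt XA, auto)
      also have "\<dots> = XA * (B * N)" by (rule assoc_mult_mat, insert XA B N, auto)
      finally show ?thesis unfolding BN using XA by simp
    qed
    have PPid: "P * P = P"
    proof -
      have "P * P = P * ((XA * B) * transpose_mat XA)" by (metis P_def)
      also have "\<dots> = (P * (XA * B)) * transpose_mat XA"
        by (rule assoc_mult_mat[symmetric], insert P XB XAt, auto)
      also have "P * (XA * B) = (P * XA) * B" by (rule assoc_mult_mat[symmetric], insert P XA B, auto)
      also have "P * XA = XA" by (rule PX)
      finally show ?thesis by (simp add: P_def)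
    qed
    define S where "S = Sigma_pow c (1/2) A"
    have S: "S \<in> carrier_mat ?k ?k" unfolding S_def Sigma_pow_def by simp
    have Z: "Zm X c A = XA * S" unfolding Zm_def XA_def S_def ..
    have PK: "P * Km X c A = Km X c A"
    proof -
      have ZC: "Zm X c A \<in> carrier_mat n ?k" by (rule Zm_carrier[OF g])
      have "P * Km X c A = P * (XA * S * transpose_mat (Zm X c A))"
        unfolding ZZt_eq[OF g, symmetric] Z ..
      also have "\<dots> = (P * XA) * S * transpose_mat (Zm X c A)"
        using P XA S ZC by (simp add: assoc_mult_mat[of _ n n _ ?k _ ?k] assoc_mult_mat[of _ n ?k _ ?k _ n]
          assoc_mult_mat[of _ n n _ ?k _ n])
      finally show ?thesis unfolding PX ZZt_eq[OF g, symmetric] Z .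
    qed
    show ?thesis using PP P Pt PPid PK by simp
  qed
  thus "Proj X A \<in> carrier_mat n n" "transpose_mat (Proj X A) = Proj X A"
    "Proj X A * Proj X A = Proj X A" "Proj X A * Km X c A = Km X c A" by auto
qed

lemma Svec: assumes g: "D \<subseteq> {..<p}" and v: "v \<in> carrier_vec (card D)"
  shows "Zm X c D *\<^sub>v v = Xsub X D *\<^sub>v (Sigma_pow c (1/2) D *\<^sub>v v)"
    "(Sigma_pow c (1/2) D *\<^sub>v v) \<bullet> (Sigma_pow c (1/2) D *\<^sub>v v) = (\<Sum>t<card D. c (pick D t) * (v $ t)^2)"
proof -
  show "Zm X c D *\<^sub>v v = Xsub X D *\<^sub>v (Sigma_pow c (1/2) D *\<^sub>v v)"
    unfolding Zm_def by (rule assoc_mult_mat_vec, insert Xsub_carrier[OF g] v, auto simp: Sigma_pow_def)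
  have cp: "t < card D \<Longrightarrow> c (pick D t) > 0" for t using cpos[OF pick_lt[OF g]] by force
  show "(Sigma_pow c (1/2) D *\<^sub>v v) \<bullet> (Sigma_pow c (1/2) D *\<^sub>v v) = (\<Sum>t<card D. c (pick D t) * (v $ t)^2)"
    unfolding Sigma_pow_half[OF g] mat_diag_mult_vec[OF v] scalar_prod_def
  proof (simp add: lessThan_atLeast0, rule sum.cong[OF refl])
    fix t assume "t \<in> {0..<card D}"
    hence t: "t < card D" by simp
    have "sqrt (c (pick D t)) * sqrt (c (pick D t)) = c (pick D t)" using cp[OF t] by simp
    thus "sqrt (c (pick D t)) * v $ t * (sqrt (c (pick D t)) * v $ t) = c (pick D t) * (v $ t)\<^sup>2"
      by (simp add: power2_eq_square algebra_simps)
  qed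
qed

end


lemma vnorm_sum: "v \<in> carrier_vec k \<Longrightarrow> v \<bullet> v = (\<Sum>t<k. ((v :: real vec) $ t)^2)"
  by (auto simp: scalar_prod_def lessThan_atLeast0 power2_eq_square)

context model
begin

lemma s_bounds: assumes g: "D \<subseteq> {..<p}" and v: "v \<in> carrier_vec (card D)"
  and lo: "\<And>j. j < p \<Longrightarrow> \<phi> \<le> c j"
  shows "\<phi> * (v \<bullet> v) \<le> (Sigma_pow c (1/2) D *\<^sub>v v) \<bullet> (Sigma_pow c (1/2) D *\<^sub>v v)"
proof -
  have "\<phi> * (v \<bullet> v) = (\<Sum>t<card D. \<phi> * (v $ t)^2)" unfolding vnorm_sum[OF v] sum_distrib_left ..
  also have "\<dots> \<le> (\<Sum>t<card D. c (pick D t) * (v $ t)^2)"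
    by (rule sum_mono, rule mult_right_mono, insert lo pick_lt[OF g], auto)
  finally show ?thesis unfolding Svec(2)[OF g v] .
qed

lemma s_bounds_up: assumes g: "D \<subseteq> {..<p}" and v: "v \<in> carrier_vec (card D)"
  and hi: "\<And>j. j < p \<Longrightarrow> c j \<le> \<phi>"
  shows "(Sigma_pow c (1/2) D *\<^sub>v v) \<bullet> (Sigma_pow c (1/2) D *\<^sub>v v) \<le> \<phi> * (v \<bullet> v)"
proof -
  have "(\<Sum>t<card D. c (pick D t) * (v $ t)^2) \<le> (\<Sum>t<card D. \<phi> * (v $ t)^2)"
    by (rule sum_mono, rule mult_right_mono, insert hi pick_lt[OF g], auto)
  also have "\<dots> = \<phi> * (v \<bullet> v)" unfolding vnorm_sum[OF v] sum_distrib_left ..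
  finally show ?thesis unfolding Svec(2)[OF g v] .
qed

lemma part_a:
  assumes g0: "\<gamma>0 \<subseteq> {..<p}" and g: "\<gamma> \<subseteq> {..<p}" and sub: "\<gamma>0 \<subseteq> \<gamma>" and ne: "\<gamma> \<noteq> \<gamma>0"
    and inv0: "invertible_mat (transpose_mat (Xsub X \<gamma>0) * Xsub X \<gamma>0)"
    and npos: "n > 0" and mu: "\<mu> \<ge> 0"
    and lam: "\<mu> \<le> lambda_min ((1 / real n) \<cdot>\<^sub>m (transpose_mat (Xsub X (\<gamma> - \<gamma>0)) *
               (1\<^sub>m n - Proj X \<gamma>0) * Xsub X (\<gamma> - \<gamma>0)))"
    and phi: "\<phi> \<ge> 0" and lo: "\<And>j. j < p \<Longrightarrow> \<phi> \<le> c j"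
  shows "det (Wmat X c \<gamma>0) > 0"
    "(1 + real n * \<mu> * \<phi>) ^ card (\<gamma> - \<gamma>0) \<le> det (Wmat X c \<gamma>) / det (Wmat X c \<gamma>0)"
proof -
  define D where "D = \<gamma> - \<gamma>0"
  let ?k = "card D"
  have D: "D \<subseteq> {..<p}" using g by (auto simp: D_def)
  have dis: "\<gamma>0 \<inter> D = {}" by (auto simp: D_def)
  have un: "\<gamma>0 \<union> D = \<gamma>" using sub by (auto simp: D_def)
  have finD: "finite D" using D finite_subset by auto
  have kpos: "?k > 0" using ne sub finD by (auto simp: D_def card_gt_0_iff)
  obtain Gi where Gi: "Gi \<in> carrier_mat n n" and GGi: "(1\<^sub>m n + Km X c \<gamma>0) * Gi = 1\<^sub>m n"
    and GiG: "Gi * (1\<^sub>m n + Km X c \<gamma>0) = 1\<^sub>m n" using G_inv[OF g0] by auto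
  have d0: "det (Wmat X c \<gamma>0) = det (1\<^sub>m n + Km X c \<gamma>0)" by (rule det_Wmat[OF g0])
  have d0pos: "det (1\<^sub>m n + Km X c \<gamma>0) > 0" using G_det[OF g0] by simp
  show "det (Wmat X c \<gamma>0) > 0" using d0 d0pos by simp
  define R where "R = 1\<^sub>m ?k + transpose_mat (Zm X c D) * Gi * Zm X c D"
  have Rf: "R \<in> carrier_mat ?k ?k" "transpose_mat R = R"
    "\<And>v :: real vec. v \<in> carrier_vec ?k \<Longrightarrow>
       v \<bullet> (R *\<^sub>v v) = v \<bullet> v + (Zm X c D *\<^sub>v v) \<bullet> (Gi *\<^sub>v (Zm X c D *\<^sub>v v))"
    using R_facts[OF g0 D Gi GGi GiG] unfolding R_def by auto
  have split: "det (Wmat X c \<gamma>) = det (1\<^sub>m n + Km X c \<gamma>0) * det R"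
  proof -
    have "det (Wmat X c \<gamma>) = det (1\<^sub>m n + Km X c (\<gamma>0 \<union> D))" using det_Wmat[OF g] un by simp
    also have "\<dots> = det (1\<^sub>m n + Km X c \<gamma>0) * det R" unfolding R_def by (rule split_det[OF g0 D dis Gi GGi])
    finally show ?thesis .
  qed
  define P where "P = Proj X \<gamma>0"
  note Pf = proj_facts[OF g0 inv0, folded P_def]
  define Q where "Q = 1\<^sub>m n - P"
  note Qf = compl_proj[OF Pf(1-3), folded Q_def]
  have QK: "Q * Km X c \<gamma>0 = 0\<^sub>m n n"
  proof -
    have "Q * Km X c \<gamma>0 = 1\<^sub>m n * Km X c \<gamma>0 - P * Km X c \<gamma>0" unfolding Q_def
      by (rule minus_mult_distrib_mat, insert Pf Km_carrier, auto)
    moreover have "1\<^sub>m n * Km X c \<gamma>0 = Km X c \<gamma>0" by (rule left_mult_one_mat[OF Km_carrier])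
    ultimately show ?thesis using Pf(4) Km_carrier[of \<gamma>0] by simp
  qed
  define XD where "XD = Xsub X D"
  have XD: "XD \<in> carrier_mat n ?k" unfolding XD_def by (rule Xsub_carrier[OF D])
  define M where "M = transpose_mat XD * Q * XD"
  have M: "M \<in> carrier_mat ?k ?k" unfolding M_def using XD Qf by auto
  define H where "H = (1 / real n) \<cdot>\<^sub>m M"
  have H: "H \<in> carrier_mat ?k ?k" unfolding H_def using M by auto
  have Hs: "transpose_mat H = H" unfolding H_def M_def transpose_smult
    using sym_mid[OF XD Qf(1,2)] by simp
  have lamH: "\<mu> \<le> lambda_min H" using lam unfolding H_def M_def XD_def Q_def P_def D_def .
  let ?t = "real n * \<mu> * \<phi>"
  have bound: "(1 + ?t) * (v \<bullet> v) \<le> v \<bullet> (R *\<^sub>v v)" if v: "v \<in> carrier_vec ?k" for v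
  proof -
    define s where "s = Sigma_pow c (1/2) D *\<^sub>v v"
    have s: "s \<in> carrier_vec ?k" unfolding s_def using v mult_mat_vec_carrier[OF mat_diag_dim v] by (simp add: Sigma_pow_def)
    define y where "y = Zm X c D *\<^sub>v v"
    have y: "y \<in> carrier_vec n" unfolding y_def using Zm_carrier[OF D] v by auto
    have ys: "y = XD *\<^sub>v s" unfolding y_def s_def XD_def by (rule Svec(1)[OF D v])
    have f1: "y \<bullet> (Q *\<^sub>v y) \<le> y \<bullet> (Gi *\<^sub>v y)"
      by (rule ginv_proj[OF Km_carrier Km_sym Km_psd[OF g0] Gi GGi GiG Qf QK y])
    have f2: "y \<bullet> (Q *\<^sub>v y) = s \<bullet> (M *\<^sub>v s)" unfolding ys M_def
      by (rule qf_transform[symmetric, OF XD Qf(1) s])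
    have f3: "s \<bullet> (H *\<^sub>v s) = (1 / real n) * (s \<bullet> (M *\<^sub>v s))"
      unfolding H_def smult_mat_vec[OF M s] using M s by simp
    have f4: "lambda_min H * (s \<bullet> s) \<le> s \<bullet> (H *\<^sub>v s)"
      by (rule sym_lambda_bounds(1)[OF H Hs kpos s])
    have ss: "s \<bullet> s \<ge> 0" using conjugate_square_ge_0_vec[of s] by simp
    have f5: "\<mu> * (s \<bullet> s) \<le> lambda_min H * (s \<bullet> s)" using lamH ss by (rule mult_right_mono)
    have f6: "\<phi> * (v \<bullet> v) \<le> s \<bullet> s" unfolding s_def by (rule s_bounds[OF D v lo])
    have f7: "s \<bullet> (M *\<^sub>v s) = real n * (s \<bullet> (H *\<^sub>v s))" using f3 npos by simp
    have "real n * (\<mu> * (s \<bullet> s)) \<le> real n * (s \<bullet> (H *\<^sub>v s))"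
      by (rule mult_left_mono, insert f4 f5, auto)
    hence A: "y \<bullet> (Gi *\<^sub>v y) \<ge> real n * \<mu> * (s \<bullet> s)" "s \<bullet> s \<ge> \<phi> * (v \<bullet> v)"
      using f1 f2 f7 f6 by (auto simp: mult.assoc)
    have "real n * \<mu> * (\<phi> * (v \<bullet> v)) \<le> real n * \<mu> * (s \<bullet> s)"
      by (rule mult_left_mono[OF A(2)], insert mu, auto)
    hence "?t * (v \<bullet> v) \<le> y \<bullet> (Gi *\<^sub>v y)" using A(1) by (simp add: mult.assoc)
    thus ?thesis using Rf(3)[OF v] unfolding y_def by (simp add: algebra_simps)
  qed
  have "(1 + ?t) ^ ?k \<le> det R"
    by (rule det_lower_bound[OF Rf(1,2)], insert npos mu phi bound, auto)
  thus "(1 + ?t) ^ card (\<gamma> - \<gamma>0) \<le> det (Wmat X c \<gamma>) / det (Wmat X c \<gamma>0)"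
    unfolding split d0 D_def[symmetric] using d0pos by simp
qed

lemma R_ge1:
  assumes A: "A \<subseteq> {..<p}" and D: "D \<subseteq> {..<p}"
    and Gi: "Gi \<in> carrier_mat n n" and GGi: "(1\<^sub>m n + Km X c A) * Gi = 1\<^sub>m n"
    and GiG: "Gi * (1\<^sub>m n + Km X c A) = 1\<^sub>m n"
  shows "1 \<le> det (1\<^sub>m (card D) + transpose_mat (Zm X c D) * Gi * Zm X c D)"
proof -
  note Rf = R_facts[OF A D Gi GGi GiG]
  have "1 ^ card D \<le> det (1\<^sub>m (card D) + transpose_mat (Zm X c D) * Gi * Zm X c D)"
  proof (rule det_lower_bound[OF Rf(1,2)])
    fix v :: "real vec" assume v: "v \<in> carrier_vec (card D)"
    have "Zm X c D *\<^sub>v v \<in> carrier_vec n" using Zm_carrier[OF D] v by auto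
    from ginv_ge[OF Km_carrier Km_sym Km_psd[OF A] Gi GGi GiG this]
    show "1 * (v \<bullet> v) \<le> v \<bullet> ((1\<^sub>m (card D) + transpose_mat (Zm X c D) * Gi * Zm X c D) *\<^sub>v v)"
      unfolding Rf(3)[OF v] by simp
  qed simp
  thus ?thesis by simp
qed

lemma part_b:
  assumes g0: "\<gamma>0 \<subseteq> {..<p}" and g: "\<gamma> \<subseteq> {..<p}" and nsub: "\<not> \<gamma>0 \<subseteq> \<gamma>"
    and npos: "n > 0" and C: "C \<ge> 0"
    and lam: "lambda_max ((1 / real n) \<cdot>\<^sub>m (transpose_mat (Xsub X (\<gamma>0 - \<gamma>)) * Xsub X (\<gamma>0 - \<gamma>))) \<le> C"
    and phi: "\<phi> \<ge> 0" and hi: "\<And>j. j < p \<Longrightarrow> c j \<le> \<phi>"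
  shows "det (Wmat X c \<gamma>0) > 0"
    "1 / (1 + real n * C * \<phi>) ^ card (\<gamma>0 - \<gamma>) \<le> det (Wmat X c \<gamma>) / det (Wmat X c \<gamma>0)"
proof -
  define A where "A = \<gamma> \<inter> \<gamma>0"
  define E where "E = \<gamma> - \<gamma>0"
  define D where "D = \<gamma>0 - \<gamma>"
  let ?k = "card D"
  have Ag: "A \<subseteq> {..<p}" "E \<subseteq> {..<p}" "D \<subseteq> {..<p}" using g g0 by (auto simp: A_def E_def D_def)
  have un: "A \<union> E = \<gamma>" "A \<union> D = \<gamma>0" by (auto simp: A_def E_def D_def)
  have dis: "A \<inter> E = {}" "A \<inter> D = {}" by (auto simp: A_def E_def D_def)
  have finD: "finite D" using Ag(3) finite_subset by blast
  have kpos: "?k > 0" using nsub finD by (auto simp: D_def card_gt_0_iff)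
  obtain Gi where Gi: "Gi \<in> carrier_mat n n" and GGi: "(1\<^sub>m n + Km X c A) * Gi = 1\<^sub>m n"
    and GiG: "Gi * (1\<^sub>m n + Km X c A) = 1\<^sub>m n" using G_inv[OF Ag(1)] by auto
  have GA: "det (1\<^sub>m n + Km X c A) \<ge> 1" by (rule G_det[OF Ag(1)])
  define RE where "RE = 1\<^sub>m (card E) + transpose_mat (Zm X c E) * Gi * Zm X c E"
  define RD where "RD = 1\<^sub>m ?k + transpose_mat (Zm X c D) * Gi * Zm X c D"
  have sE: "det (Wmat X c \<gamma>) = det (1\<^sub>m n + Km X c A) * det RE"
  proof -
    have "det (Wmat X c \<gamma>) = det (1\<^sub>m n + Km X c (A \<union> E))" using det_Wmat[OF g] un by simp
    also have "\<dots> = det (1\<^sub>m n + Km X c A) * det RE" unfolding RE_def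
      by (rule split_det[OF Ag(1,2) dis(1) Gi GGi])
    finally show ?thesis .
  qed
  have sD: "det (Wmat X c \<gamma>0) = det (1\<^sub>m n + Km X c A) * det RD"
  proof -
    have "det (Wmat X c \<gamma>0) = det (1\<^sub>m n + Km X c (A \<union> D))" using det_Wmat[OF g0] un by simp
    also have "\<dots> = det (1\<^sub>m n + Km X c A) * det RD" unfolding RD_def
      by (rule split_det[OF Ag(1,3) dis(2) Gi GGi])
    finally show ?thesis .
  qed
  have RE1: "det RE \<ge> 1" unfolding RE_def by (rule R_ge1[OF Ag(1,2) Gi GGi GiG])
  have RD1: "det RD \<ge> 1" unfolding RD_def by (rule R_ge1[OF Ag(1,3) Gi GGi GiG])
  show "det (Wmat X c \<gamma>0) > 0" unfolding sD using GA RD1 by simp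
  have Rf: "RD \<in> carrier_mat ?k ?k" "transpose_mat RD = RD"
    "\<And>v :: real vec. v \<in> carrier_vec ?k \<Longrightarrow>
       v \<bullet> (RD *\<^sub>v v) = v \<bullet> v + (Zm X c D *\<^sub>v v) \<bullet> (Gi *\<^sub>v (Zm X c D *\<^sub>v v))"
    using R_facts[OF Ag(1,3) Gi GGi GiG] unfolding RD_def by auto
  define XD where "XD = Xsub X D"
  have XD: "XD \<in> carrier_mat n ?k" unfolding XD_def by (rule Xsub_carrier[OF Ag(3)])
  define M where "M = transpose_mat XD * XD"
  have M: "M \<in> carrier_mat ?k ?k" unfolding M_def using XD by auto
  have M1: "M = transpose_mat XD * 1\<^sub>m n * XD" unfolding M_def
    using right_mult_one_mat[of "transpose_mat XD" ?k n] XD by simp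
  define H where "H = (1 / real n) \<cdot>\<^sub>m M"
  have H: "H \<in> carrier_mat ?k ?k" unfolding H_def using M by auto
  have Hs: "transpose_mat H = H" unfolding H_def M1 transpose_smult
    using sym_mid[OF XD one_carrier_mat] by simp
  have lamH: "lambda_max H \<le> C" using lam unfolding H_def M_def XD_def D_def .
  let ?t = "real n * C * \<phi>"
  have ub: "v \<bullet> (RD *\<^sub>v v) \<le> (1 + ?t) * (v \<bullet> v)" if v: "v \<in> carrier_vec ?k" for v
  proof -
    define s where "s = Sigma_pow c (1/2) D *\<^sub>v v"
    have s: "s \<in> carrier_vec ?k" unfolding s_def using v mult_mat_vec_carrier[OF mat_diag_dim v] by (simp add: Sigma_pow_def)
    define y where "y = Zm X c D *\<^sub>v v"
    have y: "y \<in> carrier_vec n" unfolding y_def using Zm_carrier[OF Ag(3)] v by auto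
    have ys: "y = XD *\<^sub>v s" unfolding y_def s_def XD_def by (rule Svec(1)[OF Ag(3) v])
    have f1: "y \<bullet> (Gi *\<^sub>v y) \<le> y \<bullet> y"
      by (rule ginv_le[OF Km_carrier Km_sym Km_psd[OF Ag(1)] Gi GGi GiG y])
    have f2: "y \<bullet> y = s \<bullet> (M *\<^sub>v s)"
      using qf_transform[OF XD one_carrier_mat s] unfolding M1[symmetric] ys[symmetric] using y by simp
    have f3: "s \<bullet> (H *\<^sub>v s) = (1 / real n) * (s \<bullet> (M *\<^sub>v s))"
      unfolding H_def smult_mat_vec[OF M s] using M s by simp
    have f4: "s \<bullet> (H *\<^sub>v s) \<le> lambda_max H * (s \<bullet> s)"
      by (rule sym_lambda_bounds(2)[OF H Hs kpos s])
    have ss: "s \<bullet> s \<ge> 0" using conjugate_square_ge_0_vec[of s] by simp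
    have f5: "lambda_max H * (s \<bullet> s) \<le> C * (s \<bullet> s)" using lamH ss by (rule mult_right_mono)
    have f6: "s \<bullet> s \<le> \<phi> * (v \<bullet> v)" unfolding s_def by (rule s_bounds_up[OF Ag(3) v hi])
    have f7: "s \<bullet> (M *\<^sub>v s) = real n * (s \<bullet> (H *\<^sub>v s))" using f3 npos by simp
    have "real n * (s \<bullet> (H *\<^sub>v s)) \<le> real n * (C * (s \<bullet> s))"
      by (rule mult_left_mono, insert f4 f5, auto)
    also have "real n * (C * (s \<bullet> s)) \<le> real n * (C * (\<phi> * (v \<bullet> v)))"
      by (rule mult_left_mono[OF mult_left_mono[OF f6 C]], simp)
    finally have "y \<bullet> (Gi *\<^sub>v y) \<le> ?t * (v \<bullet> v)" using f1 f2 f7 by (simp add: mult.assoc)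
    thus ?thesis using Rf(3)[OF v] unfolding y_def by (simp add: algebra_simps)
  qed
  have lb: "0 \<le> v \<bullet> (RD *\<^sub>v v)" if v: "v \<in> carrier_vec ?k" for v
  proof -
    have "Zm X c D *\<^sub>v v \<in> carrier_vec n" using Zm_carrier[OF Ag(3)] v by auto
    from ginv_ge[OF Km_carrier Km_sym Km_psd[OF Ag(1)] Gi GGi GiG this]
    show ?thesis unfolding Rf(3)[OF v] using conjugate_square_ge_0_vec[of v] by simp
  qed
  have RDu: "det RD \<le> (1 + ?t) ^ ?k" by (rule det_upper_bound[OF Rf(1,2) lb ub])
  have e: "det (Wmat X c \<gamma>) / det (Wmat X c \<gamma>0) = det RE / det RD"
    unfolding sE sD using GA by simp
  have "1 / (1 + ?t) ^ ?k \<le> 1 / det RD" using RDu RD1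
    by (intro divide_left_mono, auto)
  also have "\<dots> \<le> det RE / det RD" using RE1 RD1 by (simp add: divide_right_mono)
  finally show "1 / (1 + ?t) ^ card (\<gamma>0 - \<gamma>) \<le> det (Wmat X c \<gamma>) / det (Wmat X c \<gamma>0)"
    unfolding e D_def[symmetric] .
qed

end


lemma n_pos_of_p:
  fixes X :: "real mat"
  assumes X: "X \<in> carrier_mat n p" and p: "p > 0"
    and X_inv: "\<forall>\<gamma>\<in>state_vectors p. invertible_mat (transpose_mat (Xsub X \<gamma>) * Xsub X \<gamma>)"
  shows "n > 0"
proof (rule ccontr)
  assume "\<not> n > 0"
  hence n0: "n = 0" by simp
  have "{0} \<in> state_vectors p" using p unfolding state_vectors_def by auto
  hence inv: "invertible_mat (transpose_mat (Xsub X {0}) * Xsub X {0})" using X_inv by auto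
  have XA: "Xsub X {0} \<in> carrier_mat n 1"
    using model.Xsub_carrier[of X n p "\<lambda>_. 1" "{0}"] X p unfolding model_def by auto
  define N where "N = transpose_mat (Xsub X {0}) * Xsub X {0}"
  have N0: "N = 0\<^sub>m 1 1" unfolding N_def using XA n0 by (intro eq_matI, auto simp: scalar_prod_def)
  from inv[folded N_def, unfolded N0] obtain B :: "real mat" where B': "0\<^sub>m 1 1 * B = 1\<^sub>m (dim_row (0\<^sub>m 1 1 :: real mat))"
    and B'': "B * 0\<^sub>m 1 1 = 1\<^sub>m (dim_row B)"
    unfolding invertible_mat_def inverts_mat_def by blast
  have dB: "dim_row B = 1" using arg_cong[OF B'', of dim_col] by simp
  from B' have "0\<^sub>m 1 1 * B = 1\<^sub>m 1" by simp
  hence "(0\<^sub>m 1 1 * B) $$ (0,0) = (1\<^sub>m 1 :: real mat) $$ (0,0)" by simp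
  moreover have "dim_col B = 1" using arg_cong[OF \<open>0\<^sub>m 1 1 * B = 1\<^sub>m 1\<close>, of dim_col] by simp
  ultimately show False using dB by (simp add: scalar_prod_def)
qed

theorem lemma2:
  fixes X :: "real mat" and \<beta>0 :: "real vec" and n p :: nat
    and phi_lo phi_hi :: real
  assumes X_dim: "X \<in> carrier_mat n p"
    and beta_dim: "dim_vec \<beta>0 = p"
    and X_inv: "\<forall>\<gamma>\<in>state_vectors p.
                  invertible_mat (transpose_mat (Xsub X \<gamma>) * Xsub X \<gamma>)"
    and phi_pos: "0 < phi_lo" and phi_le: "phi_lo \<le> phi_hi"
  shows
   "(\<forall>C3 \<delta>::real. C3 > 0 \<longrightarrow> \<delta> \<ge> 0 \<longrightarrow>
      (INF \<gamma>\<in>S1 p (gamma0 \<beta>0).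
         lambda_min ((1 / real n) \<cdot>\<^sub>m
           (transpose_mat (Xsub X (\<gamma> - gamma0 \<beta>0)) *
            (1\<^sub>m n - Proj X (gamma0 \<beta>0)) * Xsub X (\<gamma> - gamma0 \<beta>0))))
        \<ge> C3 * real n powr (-\<delta>) \<longrightarrow>
      (\<forall>\<gamma>\<in>S1 p (gamma0 \<beta>0). \<forall>c::nat\<Rightarrow>real.
         (\<forall>j<p. phi_lo \<le> c j \<and> c j \<le> phi_hi) \<longrightarrow>
         T2 X \<beta>0 c \<gamma> \<ge>
           1/2 * (real (card \<gamma>) - real (card (gamma0 \<beta>0))) *
             ln (1 + C3 * real n powr (1 - \<delta>) * phi_lo)))
    \<and>
    (\<forall>C2::real. C2 > 0 \<longrightarrow> gamma0 \<beta>0 \<noteq> {} \<longrightarrow> phi_max X \<beta>0 \<le> C2 \<longrightarrow>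
      (\<forall>\<gamma>\<in>S2 p (gamma0 \<beta>0). \<forall>c::nat\<Rightarrow>real.
         (\<forall>j<p. phi_lo \<le> c j \<and> c j \<le> phi_hi) \<longrightarrow>
         T2 X \<beta>0 c \<gamma> \<ge>
           - (1/2) * real (card (gamma0 \<beta>0)) * ln (1 + C2 * real n * phi_hi)))"

proof -
  let ?g0 = "gamma0 \<beta>0"
  have g0: "?g0 \<subseteq> {..<p}" unfolding gamma0_def beta_dim by auto
  have g0s: "?g0 \<in> state_vectors p" using g0 unfolding state_vectors_def by auto
  have finS: "finite (state_vectors p)" unfolding state_vectors_def by simp
  have dX: "dim_row X = n" "dim_col X = p" using X_dim by auto
  show ?thesis
  proof (intro conjI allI impI ballI)
    fix C3 \<delta> :: real and \<gamma> and c :: "nat \<Rightarrow> real"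
    assume C3: "C3 > 0" and \<delta>: "\<delta> \<ge> 0"
      and INF: "C3 * real n powr (-\<delta>) \<le> (INF \<gamma>\<in>S1 p ?g0.
         lambda_min ((1 / real n) \<cdot>\<^sub>m
           (transpose_mat (Xsub X (\<gamma> - ?g0)) * (1\<^sub>m n - Proj X ?g0) * Xsub X (\<gamma> - ?g0))))"
      and gS: "\<gamma> \<in> S1 p ?g0" and cb: "\<forall>j<p. phi_lo \<le> c j \<and> c j \<le> phi_hi"
    have g: "\<gamma> \<subseteq> {..<p}" and sub: "?g0 \<subseteq> \<gamma>" and ne: "\<gamma> \<noteq> ?g0"
      using gS unfolding S1_def state_vectors_def by auto
    have p: "p > 0" using g sub ne by (cases p, auto)
    have npos: "n > 0" by (rule n_pos_of_p[OF X_dim p X_inv])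
    interpret model X n p c using X_dim cb phi_pos unfolding model_def by force
    define \<mu> where "\<mu> = C3 * real n powr (-\<delta>)"
    have mu: "\<mu> > 0" unfolding \<mu>_def using C3 npos by simp
    have finS1: "finite (S1 p ?g0)" using finS unfolding S1_def by auto
    have lam: "\<mu> \<le> lambda_min ((1 / real n) \<cdot>\<^sub>m
           (transpose_mat (Xsub X (\<gamma> - ?g0)) * (1\<^sub>m n - Proj X ?g0) * Xsub X (\<gamma> - ?g0)))"
    proof -
      let ?f = "\<lambda>\<gamma>. lambda_min ((1 / real n) \<cdot>\<^sub>m
           (transpose_mat (Xsub X (\<gamma> - ?g0)) * (1\<^sub>m n - Proj X ?g0) * Xsub X (\<gamma> - ?g0)))"
      have "(INF \<gamma>\<in>S1 p ?g0. ?f \<gamma>) \<le> ?f \<gamma>"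
        by (rule cINF_lower[OF bdd_below_finite[OF finite_imageI[OF finS1]] gS])
      thus ?thesis unfolding \<mu>_def using INF by linarith
    qed
    have inv0: "invertible_mat (transpose_mat (Xsub X ?g0) * Xsub X ?g0)" using X_inv g0s by auto
    have lo: "\<And>j. j < p \<Longrightarrow> phi_lo \<le> c j" using cb by auto
    note pa = part_a[OF g0 g sub ne inv0 npos less_imp_le[OF mu] lam less_imp_le[OF phi_pos] lo]
    let ?t = "real n * \<mu> * phi_lo"
    let ?k = "card (\<gamma> - ?g0)"
    have t: "?t \<ge> 0" using mu phi_pos by simp
    have pos: "0 < (1 + ?t) ^ ?k" using t by simp
    have "ln ((1 + ?t) ^ ?k) \<le> ln (det (Wmat X c \<gamma>) / det (Wmat X c ?g0))"
      using pa(2) pos by (subst ln_le_cancel_iff, auto)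
    hence L: "real ?k * ln (1 + ?t) \<le> ln (det (Wmat X c \<gamma>) / det (Wmat X c ?g0))"
      using t by (simp add: ln_realpow)
    have fin: "finite \<gamma>" using g finite_subset by blast
    have card: "real (card \<gamma>) - real (card ?g0) = real ?k"
      using card_Diff_subset[OF finite_subset[OF sub fin] sub] card_mono[OF fin sub] by simp
    have tt: "C3 * real n powr (1 - \<delta>) * phi_lo = ?t"
      unfolding \<mu>_def using npos by (simp add: powr_diff powr_minus divide_inverse)
    show "1/2 * (real (card \<gamma>) - real (card ?g0)) * ln (1 + C3 * real n powr (1 - \<delta>) * phi_lo)
          \<le> T2 X \<beta>0 c \<gamma>"
      unfolding T2_def card tt using L by simp
  next
    fix C2 :: real and \<gamma> and c :: "nat \<Rightarrow> real"
    assume C2: "C2 > 0" and ne: "?g0 \<noteq> {}" and pm: "phi_max X \<beta>0 \<le> C2"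
      and gS: "\<gamma> \<in> S2 p ?g0" and cb: "\<forall>j<p. phi_lo \<le> c j \<and> c j \<le> phi_hi"
    have g: "\<gamma> \<subseteq> {..<p}" and nsub: "\<not> ?g0 \<subseteq> \<gamma>"
      using gS unfolding S2_def state_vectors_def by auto
    have p: "p > 0" using g0 ne by (cases p, auto)
    have npos: "n > 0" by (rule n_pos_of_p[OF X_dim p X_inv])
    interpret model X n p c using X_dim cb phi_pos unfolding model_def by force
    have finS2: "finite (S2 p ?g0)" using finS unfolding S2_def by auto
    have lam: "lambda_max ((1 / real n) \<cdot>\<^sub>m
           (transpose_mat (Xsub X (?g0 - \<gamma>)) * Xsub X (?g0 - \<gamma>))) \<le> C2"
    proof -
      let ?f = "\<lambda>\<gamma>. lambda_max ((1 / real n) \<cdot>\<^sub>m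
           (transpose_mat (Xsub X (?g0 - \<gamma>)) * Xsub X (?g0 - \<gamma>)))"
      have "?f \<gamma> \<le> Max (?f ` S2 p ?g0)" by (rule Max_ge[OF finite_imageI[OF finS2] imageI[OF gS]])
      thus ?thesis using pm unfolding phi_max_def dX by linarith
    qed
    have hi: "\<And>j. j < p \<Longrightarrow> c j \<le> phi_hi" using cb by auto
    have phi: "phi_hi \<ge> 0" using phi_pos phi_le by simp
    note pb = part_b[OF g0 g nsub npos less_imp_le[OF C2] lam phi hi]
    let ?t = "real n * C2 * phi_hi"
    let ?k = "card (?g0 - \<gamma>)"
    have t: "?t \<ge> 0" using C2 phi by simp
    have pos: "0 < 1 / (1 + ?t) ^ ?k" using t by simp
    have "ln (1 / (1 + ?t) ^ ?k) \<le> ln (det (Wmat X c \<gamma>) / det (Wmat X c ?g0))"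
      using ln_mono[OF _ pos] pb(2) by simp
    hence L: "- (real ?k * ln (1 + ?t)) \<le> ln (det (Wmat X c \<gamma>) / det (Wmat X c ?g0))"
      using t by (simp add: ln_realpow ln_div)
    have fin0: "finite ?g0" using g0 finite_subset by blast
    have kle: "real ?k \<le> real (card ?g0)" using card_mono[OF fin0, of "?g0 - \<gamma>"] by auto
    have lnt: "ln (1 + ?t) \<ge> 0" using t by simp
    have "real ?k * ln (1 + ?t) \<le> real (card ?g0) * ln (1 + ?t)"
      by (rule mult_right_mono[OF kle lnt])
    hence "- (real (card ?g0) * ln (1 + ?t)) \<le> ln (det (Wmat X c \<gamma>) / det (Wmat X c ?g0))"
      using L by linarith
    thus "- (1/2) * real (card ?g0) * ln (1 + C2 * real n * phi_hi) \<le> T2 X \<beta>0 c \<gamma>"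
      unfolding T2_def by (simp add: mult.commute mult.left_commute)
  qed
qed

end
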